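(* Let $\mathcal{C}$ be a 3XOR instance on variable set $\mathcal{X}$ and suppose every SOS refutation of $\mathcal{C}$ requires degree exceeding $r$ (i.e. a degree-$r$ pseudo-expectation operator for $\mathcal{C}$ exists). Then every SOS refutation of the statement "$G_{\mathcal{C}}$ and $G_{\mathcal{C}^0}$ are isomorphic" requires degree exceeding $r/3$.
   Context: A 3XOR instance $\mathcal{C}$ over $\mathcal{X}$ consists of equations $x_{j_1}+x_{j_2}+x_{j_3}=b$ over $\mathbb{Z}_2$ on three distinct variables; $\mathcal{C}^0$ replaces every right-hand side by $0$. Graph $G_{\mathcal{C}}$: for each variable $x$, two variable vertices $x\mapsto 0,x\mapsto 1$ joined by an edge; for each equation $C$ on $x_1,x_2,x_3$, four constraint vertices $\alpha_C$, one per satisfying assignment $\alpha=(x_1\mapsto a_1,x_2\mapsto a_2,x_3\mapsto a_3)$ of $C$, forming a clique, each adjacent to the variable vertices $x_i\mapsto a_i$; variable vertices are shared across constraints, constraint vertices are not. SOS for 3XOR: a degree-$r$ pseudo-expectation for $\mathcal{C}$ is a linear functional $\tilde{E}$ on real polynomials of degree at most $r$ in indeterminates $A[x\mapsto a]$ ($x\in\mathcal{X},a\in\mathbb{Z}_2$) with $\tilde{E}[1]=1$ and, for all polynomials $q$ with the product of degree at most $r$: $\tilde{E}[(A[x\mapsto a]^2-A[x\mapsto a])q]=0$; $\tilde{E}[(A[x\mapsto 0]+A[x\mapsto 1]-1)q]=0$; for each $C\in\mathcal{C}$ on $x_1,x_2,x_3$, $\tilde{E}[(\sum_{\alpha\text{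 satisfying }C}A[x_1\mapsto\alpha(x_1)]A[x_2\mapsto\alpha(x_2)]A[x_3\mapsto\alpha(x_3)]-1)q]=0$; and $\tilde{E}[p^2]\ge0$ for all $p$ of degree at most $r/2$. A degree-$r$ SOS refutation exists iff no such operator exists. SOS for isomorphism of $G,H$ ($|V(G)|=|V(H)|$, $|E(G)|=|E(H)|$): a degree-$r$ pseudo-expectation is a linear functional $\tilde{E}$ on polynomials of degree at most $r$ in indeterminates $\Pi[u\mapsto v]$ ($u\in V(G)$, $v\in V(H)$) with $\tilde{E}[1]=1$ and, for all polynomials with products of degree at most $r$: $\tilde{E}[(\Pi[u\mapsto v]^2-\Pi[u\mapsto v])q]=0$; $\tilde{E}[(\sum_{v}\Pi[u\mapsto v]-1)q]=0$ for each $u$ and $\tilde{E}[(\sum_u\Pi[u\mapsto v]-1)q]=0$ for each $v$; $\tilde{E}[(\sum_{\{u,u'\}\in E(G)}\sum_{v,v':\{v,v'\}\in E(H)}\Pi[u\mapsto v]\Pi[u'\mapsto v']-|E(G)|)p^2]\ge0$; $\tilde{E}[p^2]\ge 0$ for $\deg p\le r/2$. A degree-$r$ SOS refutation of isomorphism exists iff no such operator exists. *)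

theory Defs
  imports Complex_Main "HOL-Library.Multiset"
begin

type_synonym 'v rpoly = "'v multiset \<Rightarrow> real"

definition poly_over :: "'v set \<Rightarrow> 'v rpoly \<Rightarrow> bool" where
  "poly_over S p \<longleftrightarrow> finite {m. p m \<noteq> 0} \<and> (\<forall>m. p m \<noteq> 0 \<longrightarrow> set_mset m \<subseteq> S)"

definition deg_le :: "'v rpoly \<Rightarrow> nat \<Rightarrow> bool" where
  "deg_le p d \<longleftrightarrow> (\<forall>m. p m \<noteq> 0 \<longrightarrow> size m \<le> d)"

definition pconst :: "real \<Rightarrow> 'v rpoly" where
  "pconst c = (\<lambda>m. if m = {#} then c else 0)"

definition pvar :: "'v \<Rightarrow> 'v rpoly" where
  "pvar v = (\<lambda>m. if m = {#v#} then 1 else 0)"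

definition padd :: "'v rpoly \<Rightarrow> 'v rpoly \<Rightarrow> 'v rpoly" where
  "padd p q = (\<lambda>m. p m + q m)"

definition psub :: "'v rpoly \<Rightarrow> 'v rpoly \<Rightarrow> 'v rpoly" where
  "psub p q = (\<lambda>m. p m - q m)"

definition psmult :: "real \<Rightarrow> 'v rpoly \<Rightarrow> 'v rpoly" where
  "psmult c p = (\<lambda>m. c * p m)"

definition psum :: "'i set \<Rightarrow> ('i \<Rightarrow> 'v rpoly) \<Rightarrow> 'v rpoly" where
  "psum I f = (\<lambda>m. \<Sum>i\<in>I. f i m)"

definition pmul :: "'v rpoly \<Rightarrow> 'v rpoly \<Rightarrow> 'v rpoly" where
  "pmul p q = (\<lambda>m. \<Sum>a\<in>{a. a \<subseteq># m}. p a * q (m - a))"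

text \<open>A linear functional on polynomials is determined by its values L on monomials.\<close>

definition pE :: "('v multiset \<Rightarrow> real) \<Rightarrow> 'v rpoly \<Rightarrow> real" where
  "pE L p = (\<Sum>m\<in>{m. p m \<noteq> 0}. p m * L m)"

definition annihilates :: "('v multiset \<Rightarrow> real) \<Rightarrow> 'v set \<Rightarrow> nat \<Rightarrow> 'v rpoly \<Rightarrow> bool" where
  "annihilates L S r g \<longleftrightarrow>
     (\<forall>q. poly_over S q \<longrightarrow> deg_le (pmul g q) r \<longrightarrow> pE L (pmul g q) = 0)"

definition psd_op :: "('v multiset \<Rightarrow> real) \<Rightarrow> 'v set \<Rightarrow> nat \<Rightarrow> bool" where
  "psd_op L S r \<longleftrightarrow> (\<forall>p. poly_over S p \<longrightarrow> deg_le p (r div 2) \<longrightarrow> pE L (pmul p p) \<ge> 0)"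

text \<open>An equation x1 + x2 + x3 = b over Z_2 is a tuple (x1,x2,x3,b); Z_2 is bool
  (False = 0, True = 1); an instance is a list of equations.\<close>

type_synonym 'x xor_eq = "'x \<times> 'x \<times> 'x \<times> bool"

fun sat3 :: "'x xor_eq \<Rightarrow> bool \<times> bool \<times> bool \<Rightarrow> bool" where
  "sat3 (x1, x2, x3, b) (a1, a2, a3) \<longleftrightarrow> ((a1 \<noteq> a2) \<noteq> a3) = b"

fun eq_ok :: "'x set \<Rightarrow> 'x xor_eq \<Rightarrow> bool" where
  "eq_ok X (x1, x2, x3, b) \<longleftrightarrow> x1 \<in> X \<and> x2 \<in> X \<and> x3 \<in> X \<and> x1 \<noteq> x2 \<and> x1 \<noteq> x3 \<and> x2 \<noteq> x3"

definition xor3_instance :: "'x set \<Rightarrow> 'x xor_eq list \<Rightarrow> bool" where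
  "xor3_instance X cs \<longleftrightarrow> finite X \<and> (\<forall>e\<in>set cs. eq_ok X e)"

text \<open>C^0: all right-hand sides replaced by 0.\<close>
definition homog :: "'x xor_eq list \<Rightarrow> 'x xor_eq list" where
  "homog cs = map (\<lambda>(x1, x2, x3, b). (x1, x2, x3, False)) cs"

fun eq_poly :: "'x xor_eq \<Rightarrow> ('x \<times> bool) rpoly" where
  "eq_poly (x1, x2, x3, b) =
     psub (psum {\<alpha>. sat3 (x1, x2, x3, b) \<alpha>}
             (\<lambda>(a1, a2, a3). pmul (pvar (x1, a1)) (pmul (pvar (x2, a2)) (pvar (x3, a3)))))
          (pconst 1)"

text \<open>Degree-r pseudo-expectation for a 3XOR instance; indeterminate A[x->a] is (x,a).\<close>
definition xor_pseudo_exp ::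
  "'x set \<Rightarrow> 'x xor_eq list \<Rightarrow> nat \<Rightarrow> (('x \<times> bool) multiset \<Rightarrow> real) \<Rightarrow> bool" where
  "xor_pseudo_exp X cs r L \<longleftrightarrow>
     (let S = X \<times> (UNIV :: bool set) in
       L {#} = 1 \<and>
       (\<forall>x\<in>X. \<forall>a. annihilates L S r
           (psub (pmul (pvar (x, a)) (pvar (x, a))) (pvar (x, a)))) \<and>
       (\<forall>x\<in>X. annihilates L S r
           (psub (padd (pvar (x, False)) (pvar (x, True))) (pconst 1))) \<and>
       (\<forall>e\<in>set cs. annihilates L S r (eq_poly e)) \<and>
       psd_op L S r)"

datatype 'x gvert = VarV 'x bool | ConV nat "bool \<times> bool \<times> bool"

fun ev1 :: "'x xor_eq \<Rightarrow> 'x" where "ev1 (x1, x2, x3, b) = x1"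
fun ev2 :: "'x xor_eq \<Rightarrow> 'x" where "ev2 (x1, x2, x3, b) = x2"
fun ev3 :: "'x xor_eq \<Rightarrow> 'x" where "ev3 (x1, x2, x3, b) = x3"

text \<open>Constraint vertices are tagged by the position i of the equation in the list.\<close>
definition gc_verts :: "'x set \<Rightarrow> 'x xor_eq list \<Rightarrow> 'x gvert set" where
  "gc_verts X cs =
     {VarV x a | x a. x \<in> X} \<union>
     {ConV i \<alpha> | i \<alpha>. i < length cs \<and> sat3 (cs ! i) \<alpha>}"

definition gc_edges :: "'x set \<Rightarrow> 'x xor_eq list \<Rightarrow> 'x gvert set set" where
  "gc_edges X cs =
     {{VarV x False, VarV x True} | x. x \<in> X} \<union>
     {{ConV i \<alpha>, ConV i \<beta>} | i \<alpha> \<beta>.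
        i < length cs \<and> sat3 (cs ! i) \<alpha> \<and> sat3 (cs ! i) \<beta> \<and> \<alpha> \<noteq> \<beta>} \<union>
     {{ConV i (a1, a2, a3), VarV y c} | i a1 a2 a3 y c.
        i < length cs \<and> sat3 (cs ! i) (a1, a2, a3) \<and>
        ((y, c) = (ev1 (cs ! i), a1) \<or> (y, c) = (ev2 (cs ! i), a2) \<or> (y, c) = (ev3 (cs ! i), a3))}"

text \<open>Indeterminate Pi[u->v] is the pair (u,v).  The edge polynomial sums over unordered edges {u,u'} of G (with one
orientation) and ordered pairs (v,v') with {v,v'} an edge of H; summing over both
orientations of the G-edge and halving yields literally the same polynomial.\<close>

definition edge_poly :: "'v set set \<Rightarrow> 'w set set \<Rightarrow> ('v \<times> 'w) rpoly" where
  "edge_poly EG EH =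
     psmult (1/2)
       (psum {(u, u'). {u, u'} \<in> EG}
          (\<lambda>(u, u'). psum {(v, v'). {v, v'} \<in> EH}
             (\<lambda>(v, v'). pmul (pvar (u, v)) (pvar (u', v')))))"

definition iso_pseudo_exp ::
  "'v set \<Rightarrow> 'v set set \<Rightarrow> 'w set \<Rightarrow> 'w set set \<Rightarrow> nat \<Rightarrow> (('v \<times> 'w) multiset \<Rightarrow> real) \<Rightarrow> bool" where
  "iso_pseudo_exp VG EG VH EH r L \<longleftrightarrow>
     (let S = VG \<times> VH in
       L {#} = 1 \<and>
       (\<forall>u\<in>VG. \<forall>v\<in>VH. annihilates L S r
           (psub (pmul (pvar (u, v)) (pvar (u, v))) (pvar (u, v)))) \<and>
       (\<forall>u\<in>VG. annihilates L S r (psub (psum VH (\<lambda>v. pvar (u, v))) (pconst 1))) \<and>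
       (\<forall>v\<in>VH. annihilates L S r (psub (psum VG (\<lambda>u. pvar (u, v))) (pconst 1))) \<and>
       (\<forall>p. poly_over S p \<longrightarrow>
           deg_le (pmul (psub (edge_poly EG EH) (pconst (real (card EG)))) (pmul p p)) r \<longrightarrow>
           pE L (pmul (psub (edge_poly EG EH) (pconst (real (card EG)))) (pmul p p)) \<ge> 0) \<and>
       psd_op L S r)"

end

theory Submission
  imports Defs "HOL-Library.List_Lexorder"
begin

definition supp :: "'v rpoly \<Rightarrow> 'v multiset set" where
  "supp p = {m. p m \<noteq> 0}"

lemma in_supp[simp]: "m \<in> supp p \<longleftrightarrow> p m \<noteq> 0"
  by (simp add: supp_def)

lemma finite_submsets: "finite {a. a \<subseteq># (m::'v multiset)}"
proof -
  have "{a. a \<subseteq># m} \<subseteq> (\<Union>k\<in>{..size m}. multisets_of_size (set_mset m) k)"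
    by (auto simp: multisets_of_size_def size_mset_mono dest: mset_subset_eqD)
  moreover have "finite (\<Union>k\<in>{..size m}. multisets_of_size (set_mset m) k)"
    by auto
  ultimately show ?thesis by (rule finite_subset)
qed

lemma supp_pmul: "supp (pmul p q) \<subseteq> (\<lambda>(a,b). a+b) ` (supp p \<times> supp q)"
proof
  fix m assume "m \<in> supp (pmul p q)"
  then have "(\<Sum>a\<in>{a. a \<subseteq># m}. p a * q (m - a)) \<noteq> 0" by (simp add: pmul_def)
  then obtain a where "a \<subseteq># m" "p a * q (m - a) \<noteq> 0"
    by (rule sum.not_neutral_contains_not_neutral) auto
  then show "m \<in> (\<lambda>(a,b). a+b) ` (supp p \<times> supp q)"
    by (intro image_eqI[where x="(a, m - a)"]) auto
qed

lemma fin_pmul: "finite (supp p) \<Longrightarrow> finite (supp q) \<Longrightarrow> finite (supp (pmul p q))"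
  by (rule finite_subset[OF supp_pmul]) auto

lemma pmul_pairs:
  assumes "finite (supp p)" "finite (supp q)"
  shows "pmul p q m = (\<Sum>x\<in>{x\<in>supp p \<times> supp q. fst x + snd x = m}. p (fst x) * q (snd x))"
proof -
  have "pmul p q m = (\<Sum>a\<in>{a. a \<subseteq># m}. p a * q (m - a))" by (simp add: pmul_def)
  also have "\<dots> = (\<Sum>a\<in>{a. a \<subseteq># m \<and> p a \<noteq> 0 \<and> q (m - a) \<noteq> 0}. p a * q (m - a))"
    by (rule sum.mono_neutral_right) (auto simp: finite_submsets)
  also have "\<dots> = (\<Sum>x\<in>{x\<in>supp p \<times> supp q. fst x + snd x = m}. p (fst x) * q (snd x))"
    by (rule sum.reindex_bij_witness[where i=fst and j="\<lambda>a. (a, m - a)"]) auto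
  finally show ?thesis .
qed

lemma sum_pmul:
  assumes fp: "finite (supp p)" and fq: "finite (supp q)"
  shows "(\<Sum>m\<in>supp (pmul p q). pmul p q m * f m)
       = (\<Sum>a\<in>supp p. \<Sum>b\<in>supp q. p a * q b * f (a + b))"
proof -
  let ?T = "(\<lambda>(a,b). a+b) ` (supp p \<times> supp q)"
  have fT: "finite ?T" using fp fq by auto
  have "(\<Sum>m\<in>supp (pmul p q). pmul p q m * f m) = (\<Sum>m\<in>?T. pmul p q m * f m)"
    by (rule sum.mono_neutral_left[OF fT supp_pmul]) auto
  also have "\<dots> = (\<Sum>m\<in>?T. \<Sum>x\<in>{x\<in>supp p \<times> supp q. fst x + snd x = m}. p (fst x) * q (snd x) * f (fst x + snd x))"
    by (rule sum.cong[OF refl]) (simp add: pmul_pairs[OF fp fq] sum_distrib_right)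
  also have "\<dots> = (\<Sum>x\<in>supp p \<times> supp q. p (fst x) * q (snd x) * f (fst x + snd x))"
    by (rule sum.group) (use fp fq in \<open>auto\<close>)
  also have "\<dots> = (\<Sum>a\<in>supp p. \<Sum>b\<in>supp q. p a * q b * f (a + b))"
    unfolding sum.cartesian_product by (rule sum.cong) auto
  finally show ?thesis .
qed

lemma pE_pmul:
  assumes "finite (supp p)" "finite (supp q)"
  shows "pE L (pmul p q) = (\<Sum>a\<in>supp p. \<Sum>b\<in>supp q. p a * q b * L (a + b))"
  using sum_pmul[OF assms, of L] by (simp add: pE_def supp_def)

lemma deg_le_pmul:
  assumes "deg_le p k" "deg_le q l"
  shows "deg_le (pmul p q) (k + l)"
  unfolding deg_le_def
proof (intro allI impI)
  fix m assume "pmul p q m \<noteq> 0"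
  then have "(\<Sum>a\<in>{a. a \<subseteq># m}. p a * q (m - a)) \<noteq> 0" by (simp add: pmul_def)
  then obtain a where a: "a \<subseteq># m" "p a * q (m - a) \<noteq> 0"
    by (rule sum.not_neutral_contains_not_neutral) auto
  then have "size a \<le> k" "size (m - a) \<le> l" using assms by (auto simp: deg_le_def)
  moreover have "size m = size a + size (m - a)"
    using a(1) by (metis size_union subset_mset.add_diff_inverse)
  ultimately show "size m \<le> k + l" by simp
qed

lemma poly_over_pmul:
  assumes "poly_over S p" "poly_over S q"
  shows "poly_over S (pmul p q)"
  unfolding poly_over_def
proof (intro conjI allI impI)
  show "finite {m. pmul p q m \<noteq> 0}"
    using fin_pmul[of p q] assms by (simp add: poly_over_def supp_def)
next
  fix m assume "pmul p q m \<noteq> 0"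
  then have "m \<in> supp (pmul p q)" by simp
  then obtain a b where "m = a + b" "p a \<noteq> 0" "q b \<noteq> 0" using supp_pmul by fastforce
  then show "set_mset m \<subseteq> S" using assms by (auto simp: poly_over_def)
qed


lemma fin_sep: "finite A \<Longrightarrow> finite {a\<in>A. P a}"
  by (erule finite_subset[rotated]) blast

definition key :: "'v list \<Rightarrow> 'v multiset \<Rightarrow> nat list" where
  "key vs m = map (count m) vs"

lemma key_add_less: "key vs a < key vs b \<Longrightarrow> key vs (a + c) < key vs (b + c)"
  unfolding key_def
proof (induction vs)
  case Nil then show ?case by simp
next
  case (Cons v vs) then show ?case by auto
qed

lemma key_add_eq: "key vs a = key vs b \<Longrightarrow> key vs (a + c) = key vs (b + c)"
  by (simp add: key_def map_eq_conv)

lemma key_add_le: "key vs a \<le> key vs b \<Longrightarrow> key vs (a + c) \<le> key vs (b + c)"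
  using key_add_less[of vs a b c] key_add_eq[of vs a b c] by (auto simp: order.order_iff_strict)

lemma key_inj:
  assumes "set_mset a \<subseteq> set vs" "set_mset b \<subseteq> set vs" "key vs a = key vs b"
  shows "a = b"
proof (rule multiset_eqI)
  fix x
  show "count a x = count b x"
  proof (cases "x \<in> set vs")
    case True
    then obtain i where "i < length vs" "vs ! i = x" by (auto simp: in_set_conv_nth)
    then show ?thesis using assms(3) unfolding key_def
      by (metis nth_map)
  next
    case False
    then have "x \<notin># a" "x \<notin># b" using assms(1,2) by auto
    then show ?thesis by (simp add: not_in_iff)
  qed
qed

lemma exists_key_max:
  assumes "finite A" "a0 \<in> A"
  shows "\<exists>a1\<in>A. \<forall>a\<in>A. key vs a \<le> key vs a1"
proof -
  have "Max (key vs ` A) \<in> key vs ` A" using assms by (intro Max_in) auto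
  then obtain a1 where "a1 \<in> A" "key vs a1 = Max (key vs ` A)" by auto
  moreover have "\<forall>a\<in>A. key vs a \<le> Max (key vs ` A)" using assms by auto
  ultimately show ?thesis by metis
qed

lemma pmul_lead:
  assumes fp: "finite (supp p)" and fq: "finite (supp q)"
    and a0: "p a0 \<noteq> 0" and b0: "q b0 \<noteq> 0"
    and dp: "deg_le p (size a0)" and dq: "deg_le q (size b0)"
  shows "\<exists>m. size m = size a0 + size b0 \<and> pmul p q m \<noteq> 0"
proof -
  have "finite (\<Union>(set_mset ` (supp p \<union> supp q)))" using fp fq by (intro finite_UN_I) auto
  from finite_list[OF this] obtain vs where vs: "set vs = \<Union>(set_mset ` (supp p \<union> supp q))" ..
  define A where "A = {a\<in>supp p. size a = size a0}"
  define B where "B = {b\<in>supp q. size b = size b0}"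
  have "finite A" "a0 \<in> A" using fin_sep[OF fp] a0 by (auto simp: A_def)
  then obtain a1 where a1: "a1 \<in> A" "\<forall>a\<in>A. key vs a \<le> key vs a1"
    using exists_key_max by blast
  have "finite B" "b0 \<in> B" using fin_sep[OF fq] b0 by (auto simp: B_def)
  then obtain b1 where b1: "b1 \<in> B" "\<forall>b\<in>B. key vs b \<le> key vs b1"
    using exists_key_max by blast
  define m where "m = a1 + b1"
  have S: "a1 \<in> {a. a \<subseteq># m}" by (simp add: m_def)
  have Z: "\<forall>a\<in>{a. a \<subseteq># m} - {a1}. p a * q (m - a) = 0"
  proof (rule ccontr)
    assume "\<not> ?thesis"
    then obtain a where a: "a \<subseteq># m" "a \<noteq> a1" "p a \<noteq> 0" "q (m - a) \<noteq> 0" by auto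
    define b where "b = m - a"
    have ab: "a + b = a1 + b1" using a(1) by (simp add: b_def m_def[symmetric])
    have "size a \<le> size a0" using dp a(3) by (auto simp: deg_le_def)
    moreover have "size b \<le> size b0" using dq a(4) by (auto simp: deg_le_def b_def)
    moreover have "size a + size b = size a0 + size b0"
      using ab a1(1) b1(1) by (metis (mono_tags, lifting) A_def B_def mem_Collect_eq size_union)
    ultimately have "a \<in> A" "b \<in> B" using a(3,4) by (auto simp: A_def B_def b_def)
    then have ka: "key vs a \<le> key vs a1" and kb: "key vs b \<le> key vs b1" using a1 b1 by auto
    have "\<not> key vs a < key vs a1"
    proof
      assume "key vs a < key vs a1"
      then have "key vs (a + b) < key vs (a1 + b)" by (rule key_add_less)
      also have "key vs (a1 + b) \<le> key vs (a1 + b1)"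
        using key_add_le[OF kb, of a1] by (simp add: add.commute)
      finally show False using ab by simp
    qed
    then have "key vs a = key vs a1" using ka by simp
    moreover have "set_mset a \<subseteq> set vs" "set_mset a1 \<subseteq> set vs"
      using a(3) a1(1) vs by (auto simp: A_def)
    ultimately have "a = a1" using key_inj by blast
    then show False using a(2) by simp
  qed
  have "pmul p q m = (\<Sum>a\<in>{a. a \<subseteq># m}. p a * q (m - a))" by (simp add: pmul_def)
  also have "\<dots> = p a1 * q (m - a1) + (\<Sum>a\<in>{a. a \<subseteq># m} - {a1}. p a * q (m - a))"
    by (rule sum.remove[OF finite_submsets S])
  also have "\<dots> = p a1 * q b1" using sum.neutral[OF Z] by (simp add: m_def)
  finally have "pmul p q m \<noteq> 0" using a1(1) b1(1) by (simp add: A_def B_def)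
  moreover have "size m = size a0 + size b0" using a1(1) b1(1) by (simp add: A_def B_def m_def)
  ultimately show ?thesis by blast
qed

lemma deg_lower:
  assumes fg: "finite (supp g)" and fq: "finite (supp q)"
    and a0: "g a0 \<noteq> 0" and dg: "deg_le g (size a0)"
    and d: "deg_le (pmul g q) d"
  shows "deg_le q (d - size a0)"
  unfolding deg_le_def
proof (intro allI impI)
  fix b assume b: "q b \<noteq> 0"
  define l where "l = Max (size ` supp q)"
  have "l \<in> size ` supp q" unfolding l_def using fq b by (intro Max_in) auto
  then obtain b0 where b0: "q b0 \<noteq> 0" "size b0 = l" by auto
  have dq: "deg_le q (size b0)" unfolding deg_le_def b0(2) l_def using fq by auto
  obtain m where "size m = size a0 + size b0" "pmul g q m \<noteq> 0"
    using pmul_lead[OF fg fq a0 b0(1) dg dq] by blast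
  then have "size a0 + l \<le> d" using d b0(2) by (auto simp: deg_le_def)
  moreover have "size b \<le> l" unfolding l_def using fq b by auto
  ultimately show "size b \<le> d - size a0" by simp
qed


definition mon :: "'v multiset \<Rightarrow> 'v rpoly" where
  "mon n = (\<lambda>m. if m = n then 1 else 0)"

lemma pvar_mon: "pvar v = mon {#v#}"
  by (simp add: pvar_def mon_def)

lemma pconst1_mon: "pconst 1 = mon {#}"
  by (simp add: pconst_def mon_def)

lemma supp_mon[simp]: "supp (mon n) = {n}"
  by (auto simp: supp_def mon_def)

lemma pmul_mon: "pmul (mon n) q m = (if n \<subseteq># m then q (m - n) else 0)"
proof -
  have "pmul (mon n) q m = (\<Sum>a\<in>{a. a \<subseteq># m}. if a = n then q (m - a) else 0)"
    unfolding pmul_def mon_def by (rule sum.cong) auto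
  also have "\<dots> = (if n \<subseteq># m then q (m - n) else 0)"
    by (simp add: sum.delta[OF finite_submsets])
  finally show ?thesis .
qed

lemma pmul_mon_mon: "pmul (mon a) (mon b) = mon (a + b)"
proof
  fix m
  show "pmul (mon a) (mon b) m = mon (a + b) m"
    unfolding pmul_mon by (auto simp: mon_def)
qed

lemma sum_supp_superset:
  assumes "finite F" "supp g \<subseteq> F" "\<And>a. g a = 0 \<Longrightarrow> f a = 0"
  shows "sum f (supp g) = sum f F"
  by (rule sum.mono_neutral_left) (use assms in auto)

definition dfd :: "('u \<Rightarrow> 'w multiset option) \<Rightarrow> 'u multiset \<Rightarrow> bool" where
  "dfd phi m \<longleftrightarrow> (\<forall>v\<in>#m. phi v \<noteq> None)"

definition img :: "('u \<Rightarrow> 'w multiset option) \<Rightarrow> 'u multiset \<Rightarrow> 'w multiset" where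
  "img phi m = sum_mset (image_mset (\<lambda>v. the (phi v)) m)"

definition Lsub :: "('u \<Rightarrow> 'w multiset option) \<Rightarrow> ('w multiset \<Rightarrow> real) \<Rightarrow> 'u multiset \<Rightarrow> real" where
  "Lsub phi L m = (if dfd phi m then L (img phi m) else 0)"

definition subst :: "('u \<Rightarrow> 'w multiset option) \<Rightarrow> 'u rpoly \<Rightarrow> 'w rpoly" where
  "subst phi p = (\<lambda>n. \<Sum>m\<in>supp p. if dfd phi m \<and> img phi m = n then p m else 0)"

definition W :: "('w multiset \<Rightarrow> real) \<Rightarrow> 'w rpoly \<Rightarrow> 'w multiset \<Rightarrow> real" where
  "W L Q n = (\<Sum>b\<in>supp Q. Q b * L (n + b))"

lemma dfd_add[simp]: "dfd phi (a + b) \<longleftrightarrow> dfd phi a \<and> dfd phi b"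
  by (auto simp: dfd_def)

lemma dfd_empty[simp]: "dfd phi {#}"
  by (simp add: dfd_def)

lemma img_add[simp]: "img phi (a + b) = img phi a + img phi b"
  by (simp add: img_def)

lemma img_empty[simp]: "img phi {#} = {#}"
  by (simp add: img_def)

lemma img_single[simp]: "img phi {#v#} = the (phi v)"
  by (simp add: img_def)

lemma dfd_single[simp]: "dfd phi {#v#} \<longleftrightarrow> phi v \<noteq> None"
  by (simp add: dfd_def)

lemma Lsub_empty: "Lsub phi L {#} = L {#}"
  by (simp add: Lsub_def)

lemma supp_subst: "supp (subst phi p) \<subseteq> img phi ` supp p"
proof
  fix n assume "n \<in> supp (subst phi p)"
  then have "(\<Sum>m\<in>supp p. if dfd phi m \<and> img phi m = n then p m else 0) \<noteq> 0"
    by (simp add: subst_def)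
  then obtain m where "m \<in> supp p" "(if dfd phi m \<and> img phi m = n then p m else 0) \<noteq> 0"
    by (rule sum.not_neutral_contains_not_neutral)
  then show "n \<in> img phi ` supp p" by (auto split: if_splits)
qed

lemma fin_subst: "finite (supp p) \<Longrightarrow> finite (supp (subst phi p))"
  by (rule finite_subset[OF supp_subst]) auto

lemma fiber:
  assumes fp: "finite (supp p)"
  shows "(\<Sum>c\<in>supp (subst phi p). subst phi p c * h c)
       = (\<Sum>a\<in>supp p. if dfd phi a then p a * h (img phi a) else 0)"
proof -
  let ?T = "img phi ` supp p"
  have fT: "finite ?T" using fp by auto
  have "(\<Sum>c\<in>supp (subst phi p). subst phi p c * h c) = (\<Sum>c\<in>?T. subst phi p c * h c)"
    by (rule sum.mono_neutral_left[OF fT supp_subst]) auto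
  also have "\<dots> = (\<Sum>c\<in>?T. \<Sum>a\<in>supp p. if dfd phi a \<and> img phi a = c then p a * h c else 0)"
    unfolding subst_def sum_distrib_right by (intro sum.cong refl) simp
  also have "\<dots> = (\<Sum>a\<in>supp p. \<Sum>c\<in>?T. if dfd phi a \<and> img phi a = c then p a * h c else 0)"
    by (rule sum.swap)
  also have "\<dots> = (\<Sum>a\<in>supp p. if dfd phi a then p a * h (img phi a) else 0)"
  proof (rule sum.cong[OF refl])
    fix a assume a: "a \<in> supp p"
    have "(\<Sum>c\<in>?T. if dfd phi a \<and> img phi a = c then p a * h c else 0)
        = (\<Sum>c\<in>?T. if img phi a = c then (if dfd phi a then p a * h c else 0) else 0)"
      by (rule sum.cong) auto
    also have "\<dots> = (if dfd phi a then p a * h (img phi a) else 0)"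
      using a fT by (simp add: sum.delta)
    finally show "(\<Sum>c\<in>?T. if dfd phi a \<and> img phi a = c then p a * h c else 0)
        = (if dfd phi a then p a * h (img phi a) else 0)" .
  qed
  finally show ?thesis .
qed

lemma pE_pmul_W:
  assumes "finite (supp g)" "finite (supp q)"
  shows "pE L (pmul g q) = (\<Sum>a\<in>supp g. g a * W L q a)"
  unfolding pE_pmul[OF assms] W_def
  by (simp add: sum_distrib_left mult.assoc)

lemma pE_Lsub_pmul:
  assumes fg: "finite (supp g)" and fq: "finite (supp q)"
  shows "pE (Lsub phi L) (pmul g q)
       = (\<Sum>a\<in>supp g. if dfd phi a then g a * W L (subst phi q) (img phi a) else 0)"
proof -
  have "pE (Lsub phi L) (pmul g q) = (\<Sum>a\<in>supp g. \<Sum>b\<in>supp q. g a * q b * Lsub phi L (a + b))"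
    by (rule pE_pmul[OF fg fq])
  also have "\<dots> = (\<Sum>a\<in>supp g. if dfd phi a then g a * W L (subst phi q) (img phi a) else 0)"
  proof (rule sum.cong[OF refl])
    fix a
    have "W L (subst phi q) (img phi a)
        = (\<Sum>b\<in>supp q. if dfd phi b then q b * L (img phi a + img phi b) else 0)"
      unfolding W_def by (rule fiber[OF fq])
    then show "(\<Sum>b\<in>supp q. g a * q b * Lsub phi L (a + b))
        = (if dfd phi a then g a * W L (subst phi q) (img phi a) else 0)"
      by (simp add: Lsub_def sum_distrib_left mult.assoc if_distrib cong: if_cong)
  qed
  finally show ?thesis .
qed

lemma pE_Lsub_sq:
  assumes fp: "finite (supp p)"
  shows "pE (Lsub phi L) (pmul p p) = pE L (pmul (subst phi p) (subst phi p))"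
proof -
  have "pE (Lsub phi L) (pmul p p)
      = (\<Sum>a\<in>supp p. if dfd phi a then p a * W L (subst phi p) (img phi a) else 0)"
    by (rule pE_Lsub_pmul[OF fp fp])
  also have "\<dots> = (\<Sum>c\<in>supp (subst phi p). subst phi p c * W L (subst phi p) c)"
    by (rule fiber[OF fp, symmetric])
  also have "\<dots> = pE L (pmul (subst phi p) (subst phi p))"
    by (rule pE_pmul_W[symmetric]) (use fin_subst[OF fp] in auto)
  finally show ?thesis .
qed

lemma size_img:
  assumes "\<And>v M. v \<in># m \<Longrightarrow> phi v = Some M \<Longrightarrow> size M \<le> c" "dfd phi m"
  shows "size (img phi m) \<le> c * size m"
  using assms
proof (induction m)
  case empty then show ?case by simp
next
  case (add v m)
  then obtain M where M: "phi v = Some M" by (auto simp: dfd_def)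
  then have "size M \<le> c" using add.prems(1)[of v M] by simp
  moreover have "size (img phi m) \<le> c * size m"
    using add.IH add.prems by (auto simp: dfd_def)
  ultimately show ?case using M by (simp add: img_def)
qed

lemma deg_subst:
  assumes "deg_le p k" "\<And>v M. phi v = Some M \<Longrightarrow> size M \<le> c"
  shows "deg_le (subst phi p) (c * k)"
  unfolding deg_le_def
proof (intro allI impI)
  fix n assume "subst phi p n \<noteq> 0"
  then have "(\<Sum>m\<in>supp p. if dfd phi m \<and> img phi m = n then p m else 0) \<noteq> 0"
    by (simp add: subst_def)
  then obtain m where m: "m \<in> supp p" "(if dfd phi m \<and> img phi m = n then p m else 0) \<noteq> 0"
    by (rule sum.not_neutral_contains_not_neutral)
  then have "dfd phi m" "img phi m = n" by (auto split: if_splits)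
  then have "size n \<le> c * size m" using size_img[of m phi c] assms(2) by blast
  moreover have "size m \<le> k" using m(1) assms(1) by (auto simp: deg_le_def)
  ultimately show "size n \<le> c * k"
    by (meson le_trans mult_le_mono2)
qed

lemma poly_over_subst:
  assumes "poly_over S p" "\<And>v M. v \<in> S \<Longrightarrow> phi v = Some M \<Longrightarrow> set_mset M \<subseteq> S'"
  shows "poly_over S' (subst phi p)"
  unfolding poly_over_def
proof (intro conjI allI impI)
  have "finite (supp p)" using assms(1) by (simp add: poly_over_def supp_def)
  then show "finite {m. subst phi p m \<noteq> 0}" using fin_subst[of p phi] by (simp add: supp_def)
next
  fix n assume "subst phi p n \<noteq> 0"
  then have "(\<Sum>m\<in>supp p. if dfd phi m \<and> img phi m = n then p m else 0) \<noteq> 0"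
    by (simp add: subst_def)
  then obtain m where m: "m \<in> supp p" "(if dfd phi m \<and> img phi m = n then p m else 0) \<noteq> 0"
    by (rule sum.not_neutral_contains_not_neutral)
  then have d: "dfd phi m" "img phi m = n" "set_mset m \<subseteq> S"
    using assms(1) by (auto split: if_splits simp: poly_over_def)
  have "set_mset (img phi m) \<subseteq> S'" using d(1,3)
  proof (induction m)
    case empty then show ?case by simp
  next
    case (add v m)
    then obtain M where M: "phi v = Some M" by (auto simp: dfd_def)
    then have "set_mset M \<subseteq> S'" using assms(2) add.prems by auto
    then show ?case using add M by (auto simp: img_def dfd_def)
  qed
  then show "set_mset n \<subseteq> S'" using d by simp
qed


lemma deg_le_mon: "deg_le p k \<Longrightarrow> k \<le> k' \<Longrightarrow> deg_le p k'"
  by (auto simp: deg_le_def)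

lemma poly_over_mon: "set_mset n \<subseteq> S \<Longrightarrow> poly_over S (mon n)"
  by (auto simp: poly_over_def mon_def)

lemma deg_le_mon_mon: "deg_le (mon n) (size n)"
  by (auto simp: deg_le_def mon_def)

lemma fin_of_poly_over: "poly_over S p \<Longrightarrow> finite (supp p)"
  by (simp add: poly_over_def supp_def)

lemma mon_same[simp]: "mon n n = 1"
  by (simp add: mon_def)

lemma W_mon:
  assumes "finite (supp Q)"
  shows "W L (pmul (mon n) Q) a = W L Q (a + n)"
proof -
  have "W L (pmul (mon n) Q) a = (\<Sum>c\<in>supp (mon n). \<Sum>d\<in>supp Q. mon n c * Q d * L (a + (c + d)))"
    unfolding W_def by (rule sum_pmul) (use assms in auto)
  also have "\<dots> = W L Q (a + n)"
    by (simp only: supp_mon sum.insert_if finite.emptyI sum.empty mon_same) (simp add: W_def add.assoc)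
  finally show ?thesis .
qed

definition cmono :: "'x xor_eq \<Rightarrow> bool \<times> bool \<times> bool \<Rightarrow> ('x \<times> bool) multiset" where
  "cmono e \<gamma> = {#(ev1 e, fst \<gamma>), (ev2 e, fst (snd \<gamma>)), (ev3 e, snd (snd \<gamma>))#}"

lemma eq_poly_coeff:
  "eq_poly e m = (\<Sum>\<gamma>\<in>{\<gamma>. sat3 e \<gamma>}. mon (cmono e \<gamma>) m) - mon {#} m"
proof -
  obtain x1 x2 x3 b where e: "e = (x1, x2, x3, b)" by (cases e) auto
  have "\<And>\<gamma>. (case \<gamma> of (a1, a2, a3) \<Rightarrow> pmul (pvar (x1, a1)) (pmul (pvar (x2, a2)) (pvar (x3, a3)))) m
      = mon (cmono e \<gamma>) m"
    by (auto simp: e cmono_def pvar_mon pmul_mon_mon add_mset_commute split: prod.splits)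
  then show ?thesis
    by (simp add: e psub_def psum_def pconst1_mon[symmetric])
qed

lemma sum_indicator_swap:
  assumes "finite F" "finite G" "f ` G \<subseteq> F"
  shows "(\<Sum>a\<in>F. (\<Sum>\<gamma>\<in>G. mon (f \<gamma>) a) * h a) = (\<Sum>\<gamma>\<in>G. h (f \<gamma>))"
proof -
  have "(\<Sum>a\<in>F. (\<Sum>\<gamma>\<in>G. mon (f \<gamma>) a) * h a) = (\<Sum>a\<in>F. \<Sum>\<gamma>\<in>G. if a = f \<gamma> then h a else 0)"
    unfolding sum_distrib_right mon_def by (intro sum.cong refl) simp
  also have "\<dots> = (\<Sum>\<gamma>\<in>G. \<Sum>a\<in>F. if a = f \<gamma> then h a else 0)"
    by (rule sum.swap)
  also have "\<dots> = (\<Sum>\<gamma>\<in>G. h (f \<gamma>))"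
    using assms by (intro sum.cong refl) (auto simp: sum.delta)
  finally show ?thesis .
qed

locale xctx =
  fixes X :: "'x set" and cs :: "'x xor_eq list" and r :: nat and L :: "('x \<times> bool) multiset \<Rightarrow> real"
  assumes inst: "xor3_instance X cs"
    and pe: "xor_pseudo_exp X cs r L"
begin

abbreviation "SX \<equiv> X \<times> (UNIV :: bool set)"

lemma annih_W:
  assumes an: "annihilates L SX r g" and fg: "finite (supp g)" and dg: "deg_le g e"
    and Q: "poly_over SX Q" "deg_le Q k" and n: "set_mset n \<subseteq> SX"
    and sz: "e + size n + k \<le> r"
  shows "(\<Sum>a\<in>supp g. g a * W L Q (a + n)) = 0"
proof -
  let ?q = "pmul (mon n) Q"
  have fQ: "finite (supp Q)" using Q(1) by (rule fin_of_poly_over)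
  have pq: "poly_over SX ?q" by (rule poly_over_pmul[OF poly_over_mon[OF n] Q(1)])
  have "deg_le ?q (size n + k)" by (rule deg_le_pmul[OF deg_le_mon_mon Q(2)])
  then have "deg_le (pmul g ?q) (e + (size n + k))" by (rule deg_le_pmul[OF dg])
  then have "deg_le (pmul g ?q) r" by (rule deg_le_mon) (use sz in simp)
  then have "pE L (pmul g ?q) = 0" using an pq by (simp add: annihilates_def)
  moreover have "pE L (pmul g ?q) = (\<Sum>a\<in>supp g. g a * W L ?q a)"
    by (rule pE_pmul_W[OF fg fin_of_poly_over[OF pq]])
  ultimately show ?thesis by (simp add: W_mon[OF fQ])
qed

lemma R1:
  assumes Q: "poly_over SX Q" "deg_le Q k" and x: "x \<in> X" and n: "set_mset n \<subseteq> SX"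
    and sz: "size n + 2 + k \<le> r"
  shows "W L Q (add_mset (x,c) (add_mset (x,c) n)) = W L Q (add_mset (x,c) n)"
proof -
  let ?y = "(x,c)"
  let ?g = "psub (pmul (pvar ?y) (pvar ?y)) (pvar ?y)"
  have an: "annihilates L SX r ?g" using pe x by (simp add: xor_pseudo_exp_def Let_def)
  have g: "?g = (\<lambda>m. mon {#?y,?y#} m - mon {#?y#} m)"
    by (simp add: psub_def pvar_mon pmul_mon_mon)
  have F: "supp ?g \<subseteq> {{#?y,?y#}, {#?y#}}" by (auto simp: g mon_def split: if_splits)
  have fg: "finite (supp ?g)" by (rule finite_subset[OF F]) auto
  have dg: "deg_le ?g 2" by (auto simp: deg_le_def g mon_def split: if_splits)
  have "(\<Sum>a\<in>supp ?g. ?g a * W L Q (a + n)) = 0"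
    by (rule annih_W[OF an fg dg Q n]) (use sz in simp)
  also have "(\<Sum>a\<in>supp ?g. ?g a * W L Q (a + n)) = (\<Sum>a\<in>{{#?y,?y#}, {#?y#}}. ?g a * W L Q (a + n))"
    by (rule sum_supp_superset[OF _ F]) auto
  finally show ?thesis by (simp add: g mon_def)
qed

lemma R2:
  assumes Q: "poly_over SX Q" "deg_le Q k" and x: "x \<in> X" and n: "set_mset n \<subseteq> SX"
    and sz: "size n + 1 + k \<le> r"
  shows "W L Q (add_mset (x,False) n) + W L Q (add_mset (x,True) n) = W L Q n"
proof -
  let ?g = "psub (padd (pvar (x, False)) (pvar (x, True))) (pconst 1)"
  have an: "annihilates L SX r ?g" using pe x by (simp add: xor_pseudo_exp_def Let_def)
  have g: "?g = (\<lambda>m. mon {#(x,False)#} m + mon {#(x,True)#} m - mon {#} m)"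
    by (simp add: psub_def padd_def pvar_mon pconst1_mon)
  have F: "supp ?g \<subseteq> {{#(x,False)#}, {#(x,True)#}, {#}}" by (auto simp: g mon_def split: if_splits)
  have fg: "finite (supp ?g)" by (rule finite_subset[OF F]) auto
  have dg: "deg_le ?g 1" by (auto simp: deg_le_def g mon_def split: if_splits)
  have "(\<Sum>a\<in>supp ?g. ?g a * W L Q (a + n)) = 0"
    by (rule annih_W[OF an fg dg Q n]) (use sz in simp)
  also have "(\<Sum>a\<in>supp ?g. ?g a * W L Q (a + n)) = (\<Sum>a\<in>{{#(x,False)#}, {#(x,True)#}, {#}}. ?g a * W L Q (a + n))"
    by (rule sum_supp_superset[OF _ F]) auto
  finally show ?thesis by (simp add: g mon_def)
qed

lemma cmono_in:
  assumes "e \<in> set cs"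
  shows "set_mset (cmono e \<gamma>) \<subseteq> SX"
proof -
  obtain x1 x2 x3 b where e: "e = (x1, x2, x3, b)" by (cases e) auto
  have "eq_ok X e" using inst assms by (auto simp: xor3_instance_def)
  then show ?thesis by (auto simp: e cmono_def)
qed

lemma R3:
  assumes Q: "poly_over SX Q" "deg_le Q k" and e: "e \<in> set cs" and n: "set_mset n \<subseteq> SX"
    and sz: "size n + 3 + k \<le> r"
  shows "(\<Sum>\<gamma>\<in>{\<gamma>. sat3 e \<gamma>}. W L Q (cmono e \<gamma> + n)) = W L Q n"
proof -
  let ?g = "eq_poly e"
  let ?G = "{\<gamma>. sat3 e \<gamma>}"
  let ?F = "insert {#} (cmono e ` ?G)"
  have an: "annihilates L SX r ?g" using pe e by (simp add: xor_pseudo_exp_def Let_def)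
  have fG: "finite ?G" by (rule finite_subset[of _ UNIV]) auto
  have F: "supp ?g \<subseteq> ?F"
  proof
    fix m assume "m \<in> supp ?g"
    then have ne: "(\<Sum>\<gamma>\<in>?G. mon (cmono e \<gamma>) m) - mon {#} m \<noteq> 0" by (simp add: eq_poly_coeff)
    show "m \<in> ?F"
    proof (cases "m = {#}")
      case False
      then have "(\<Sum>\<gamma>\<in>?G. mon (cmono e \<gamma>) m) \<noteq> 0" using ne by (simp add: mon_def)
      then obtain \<gamma> where "\<gamma> \<in> ?G" "mon (cmono e \<gamma>) m \<noteq> 0"
        by (rule sum.not_neutral_contains_not_neutral)
      then show ?thesis by (auto simp: mon_def split: if_splits)
    qed simp
  qed
  have fF: "finite ?F" using fG by auto
  have fg: "finite (supp ?g)" by (rule finite_subset[OF F fF])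
  have dg: "deg_le ?g 3"
    unfolding deg_le_def
  proof (intro allI impI)
    fix m assume "?g m \<noteq> 0"
    then have "m \<in> ?F" using F by auto
    then show "size m \<le> 3" by (auto simp: cmono_def)
  qed
  have "(\<Sum>a\<in>supp ?g. ?g a * W L Q (a + n)) = 0"
    by (rule annih_W[OF an fg dg Q n]) (use sz in simp)
  also have "(\<Sum>a\<in>supp ?g. ?g a * W L Q (a + n)) = (\<Sum>a\<in>?F. ?g a * W L Q (a + n))"
    by (rule sum_supp_superset[OF fF F]) auto
  also have "\<dots> = (\<Sum>a\<in>?F. (\<Sum>\<gamma>\<in>?G. mon (cmono e \<gamma>) a) * W L Q (a + n))
                 - (\<Sum>a\<in>?F. mon {#} a * W L Q (a + n))"
    by (simp add: eq_poly_coeff left_diff_distrib sum_subtractf)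
  also have "(\<Sum>a\<in>?F. (\<Sum>\<gamma>\<in>?G. mon (cmono e \<gamma>) a) * W L Q (a + n)) = (\<Sum>\<gamma>\<in>?G. W L Q (cmono e \<gamma> + n))"
    by (rule sum_indicator_swap[OF fF fG]) auto
  also have "(\<Sum>a\<in>?F. mon {#} a * W L Q (a + n)) = W L Q n"
  proof -
    have "(\<Sum>a\<in>?F. mon {#} a * W L Q (a + n)) = (\<Sum>a\<in>?F. if a = {#} then W L Q (a + n) else 0)"
      unfolding mon_def by (intro sum.cong refl) simp
    also have "\<dots> = W L Q n" using sum.delta[OF fF, of "{#}" "\<lambda>a. W L Q (a + n)"] by simp
    finally show ?thesis .
  qed
  finally show ?thesis by simp
qed

end


fun xor3 :: "bool \<times> bool \<times> bool \<Rightarrow> bool \<times> bool \<times> bool \<Rightarrow> bool \<times> bool \<times> bool" where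
  "xor3 (a1, a2, a3) (b1, b2, b3) = (a1 \<noteq> b1, a2 \<noteq> b2, a3 \<noteq> b3)"

fun par :: "bool \<times> bool \<times> bool \<Rightarrow> bool" where
  "par (a1, a2, a3) = ((a1 \<noteq> a2) \<noteq> a3)"

lemma xor3_inv[simp]: "xor3 a (xor3 a g) = g"
  by (cases a; cases g) auto

lemma xor3_inv2[simp]: "xor3 (xor3 a g) g = a"
  by (cases a; cases g) auto

lemma par_xor3: "par (xor3 a b) = (par a \<noteq> par b)"
  by (cases a; cases b) auto

fun rhs :: "'x xor_eq \<Rightarrow> bool" where "rhs (x1, x2, x3, b) = b"

lemma sat3_par: "sat3 e a \<longleftrightarrow> par a = rhs e"
  by (cases e; cases a) auto

definition evk :: "'x xor_eq \<Rightarrow> nat \<Rightarrow> 'x" where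
  "evk e k = (if k = 1 then ev1 e else if k = 2 then ev2 e else ev3 e)"

definition compk :: "bool \<times> bool \<times> bool \<Rightarrow> nat \<Rightarrow> bool" where
  "compk a k = (if k = 1 then fst a else if k = 2 then fst (snd a) else snd (snd a))"

lemma length_homog[simp]: "length (homog cs) = length cs"
  by (simp add: homog_def)

lemma homog_nth:
  "i < length cs \<Longrightarrow> homog cs ! i = (ev1 (cs ! i), ev2 (cs ! i), ev3 (cs ! i), False)"
  by (cases "cs ! i") (auto simp: homog_def)

lemma ev_homog[simp]: "i < length cs \<Longrightarrow> ev1 (homog cs ! i) = ev1 (cs ! i)"
  "i < length cs \<Longrightarrow> ev2 (homog cs ! i) = ev2 (cs ! i)"
  "i < length cs \<Longrightarrow> ev3 (homog cs ! i) = ev3 (cs ! i)"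
  "i < length cs \<Longrightarrow> evk (homog cs ! i) k = evk (cs ! i) k"
  "i < length cs \<Longrightarrow> cmono (homog cs ! i) g = cmono (cs ! i) g"
  by (auto simp: homog_nth evk_def cmono_def)

lemma sat_homog: "i < length cs \<Longrightarrow> sat3 (homog cs ! i) b \<longleftrightarrow> par b = False"
  by (simp add: sat3_par homog_nth)

lemma VarV_in[simp]: "VarV x a \<in> gc_verts X cs \<longleftrightarrow> x \<in> X"
  by (auto simp: gc_verts_def)

lemma ConV_in[simp]: "ConV i a \<in> gc_verts X cs \<longleftrightarrow> i < length cs \<and> sat3 (cs ! i) a"
  by (cases a) (auto simp: gc_verts_def)

lemma ev_disj_iff:
  "((y, c) = (ev1 e, fst a) \<or> (y, c) = (ev2 e, fst (snd a)) \<or> (y, c) = (ev3 e, snd (snd a)))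
   \<longleftrightarrow> (\<exists>k\<in>{1,2,3::nat}. y = evk e k \<and> c = compk a k)"
  by (auto simp: evk_def compk_def)

lemma edge_cases_raw:
  assumes "{u, u'} \<in> gc_edges X cs"
  shows "(\<exists>x. x \<in> X \<and> {u, u'} = {VarV x False, VarV x True}) \<or>
     (\<exists>i a b. i < length cs \<and> sat3 (cs ! i) a \<and> sat3 (cs ! i) b \<and> a \<noteq> b \<and> {u, u'} = {ConV i a, ConV i b}) \<or>
     (\<exists>i a1 a2 a3 y c. i < length cs \<and> sat3 (cs ! i) (a1, a2, a3) \<and>
      ((y, c) = (ev1 (cs ! i), a1) \<or> (y, c) = (ev2 (cs ! i), a2) \<or> (y, c) = (ev3 (cs ! i), a3)) \<and>
      {u, u'} = {ConV i (a1, a2, a3), VarV y c})"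
  using assms unfolding gc_edges_def Un_iff mem_Collect_eq by metis

lemma edge_iff:
  "{u, u'} \<in> gc_edges X cs \<longleftrightarrow>
   (\<exists>x c. x \<in> X \<and> u = VarV x c \<and> u' = VarV x (\<not> c)) \<or>
   (\<exists>i a a'. i < length cs \<and> sat3 (cs ! i) a \<and> sat3 (cs ! i) a' \<and> a \<noteq> a' \<and> u = ConV i a \<and> u' = ConV i a') \<or>
   (\<exists>i a k. i < length cs \<and> sat3 (cs ! i) a \<and> k \<in> {1,2,3} \<and>
      ((u = ConV i a \<and> u' = VarV (evk (cs ! i) k) (compk a k)) \<or>
       (u' = ConV i a \<and> u = VarV (evk (cs ! i) k) (compk a k))))"
  (is "?L \<longleftrightarrow> ?A \<or> ?B \<or> ?C")
proof
  assume ?L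
  from edge_cases_raw[OF this] consider
      (c1) "\<exists>x. x \<in> X \<and> {u, u'} = {VarV x False, VarV x True}"
    | (c2) "\<exists>i a b. i < length cs \<and> sat3 (cs ! i) a \<and> sat3 (cs ! i) b \<and> a \<noteq> b \<and> {u, u'} = {ConV i a, ConV i b}"
    | (c3) "\<exists>i a1 a2 a3 y c. i < length cs \<and> sat3 (cs ! i) (a1, a2, a3) \<and>
      ((y, c) = (ev1 (cs ! i), a1) \<or> (y, c) = (ev2 (cs ! i), a2) \<or> (y, c) = (ev3 (cs ! i), a3)) \<and>
      {u, u'} = {ConV i (a1, a2, a3), VarV y c}"
    by blast
  then show "?A \<or> ?B \<or> ?C"
  proof cases
    case c1
    then obtain x where x: "x \<in> X" and e: "{u, u'} = {VarV x False, VarV x True}" by blast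
    from e have "u = VarV x False \<and> u' = VarV x True \<or> u = VarV x True \<and> u' = VarV x False"
      by (simp add: doubleton_eq_iff)
    then have ?A
    proof (elim disjE)
      assume "u = VarV x False \<and> u' = VarV x True"
      then show ?A using x by (intro exI[of _ x] exI[of _ False]) simp
    next
      assume "u = VarV x True \<and> u' = VarV x False"
      then show ?A using x by (intro exI[of _ x] exI[of _ True]) simp
    qed
    then show ?thesis ..
  next
    case c2
    then obtain i a b where h: "i < length cs" "sat3 (cs ! i) a" "sat3 (cs ! i) b" "a \<noteq> b"
      and e: "{u, u'} = {ConV i a, ConV i b}" by blast
    from e have "u = ConV i a \<and> u' = ConV i b \<or> u = ConV i b \<and> u' = ConV i a"
      by (simp add: doubleton_eq_iff)
    then have ?B
    proof (elim disjE)
      assume "u = ConV i a \<and> u' = ConV i b"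
      then show ?B using h by (intro exI[of _ i] exI[of _ a] exI[of _ b]) simp
    next
      assume "u = ConV i b \<and> u' = ConV i a"
      then show ?B using h by (intro exI[of _ i] exI[of _ b] exI[of _ a]) auto
    qed
    then show ?thesis by blast
  next
    case c3
    then obtain i a1 a2 a3 y c where h: "i < length cs" "sat3 (cs ! i) (a1, a2, a3)"
      and ev: "(y, c) = (ev1 (cs ! i), a1) \<or> (y, c) = (ev2 (cs ! i), a2) \<or> (y, c) = (ev3 (cs ! i), a3)"
      and e: "{u, u'} = {ConV i (a1, a2, a3), VarV y c}" by (elim exE conjE) (rule that; assumption)
    obtain k where k: "k \<in> {1,2,3}" "y = evk (cs ! i) k" "c = compk (a1, a2, a3) k"
      using ev_disj_iff[of y c "cs ! i" "(a1, a2, a3)"] ev by auto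
    from e have "u = ConV i (a1, a2, a3) \<and> u' = VarV y c \<or> u' = ConV i (a1, a2, a3) \<and> u = VarV y c"
      by (simp add: doubleton_eq_iff) blast
    then have C1: "u = ConV i (a1, a2, a3) \<and> u' = VarV (evk (cs ! i) k) (compk (a1, a2, a3) k) \<or>
        u' = ConV i (a1, a2, a3) \<and> u = VarV (evk (cs ! i) k) (compk (a1, a2, a3) k)"
      using k(2,3) by simp
    have ?C
      apply (rule exI[of _ i], rule exI[of _ "(a1, a2, a3)"], rule exI[of _ k])
      using h k(1) C1 by blast
    then show ?thesis by blast
  qed
next
  assume "?A \<or> ?B \<or> ?C"
  then consider (A) ?A | (B) ?B | (C) ?C by blast
  then show ?L
  proof cases
    case A
    then obtain x c where "x \<in> X" "u = VarV x c" "u' = VarV x (\<not> c)"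
      by (elim exE conjE) (rule that; assumption)
    then show ?L unfolding gc_edges_def by (cases c) (auto simp: insert_commute)
  next
    case B
    then obtain i a a' where "i < length cs" "sat3 (cs ! i) a" "sat3 (cs ! i) a'" "a \<noteq> a'" "u = ConV i a" "u' = ConV i a'"
      by (elim exE conjE) (rule that; assumption)
    then show ?L unfolding gc_edges_def by blast
  next
    case C
    then obtain i a k where h: "i < length cs" "sat3 (cs ! i) a" "k \<in> {1,2,3}"
      "(u = ConV i a \<and> u' = VarV (evk (cs ! i) k) (compk a k)) \<or>
       (u' = ConV i a \<and> u = VarV (evk (cs ! i) k) (compk a k))"
      by (elim exE conjE) (rule that; assumption)
    obtain a1 a2 a3 where a: "a = (a1, a2, a3)" by (cases a) auto
    have ev: "(evk (cs ! i) k, compk a k) = (ev1 (cs ! i), a1) \<or> (evk (cs ! i) k, compk a k) = (ev2 (cs ! i), a2)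
              \<or> (evk (cs ! i) k, compk a k) = (ev3 (cs ! i), a3)"
      using h(3) by (auto simp: evk_def compk_def a)
    have "{u, u'} = {ConV i (a1, a2, a3), VarV (evk (cs ! i) k) (compk a k)}"
      using h(4) a by (auto simp: insert_commute)
    then show ?L using h(1,2) ev a unfolding gc_edges_def Un_iff mem_Collect_eq by metis
  qed
qed


context xctx
begin

lemma eq_ok_cs: "i < length cs \<Longrightarrow> ev1 (cs ! i) \<in> X \<and> ev2 (cs ! i) \<in> X \<and> ev3 (cs ! i) \<in> X \<and>
   ev1 (cs ! i) \<noteq> ev2 (cs ! i) \<and> ev1 (cs ! i) \<noteq> ev3 (cs ! i) \<and> ev2 (cs ! i) \<noteq> ev3 (cs ! i)"
proof -
  assume "i < length cs"
  then have "cs ! i \<in> set cs" by simp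
  then have "eq_ok X (cs ! i)" using inst by (auto simp: xor3_instance_def)
  then show ?thesis by (cases "cs ! i") auto
qed

lemma R4:
  assumes Q: "poly_over SX Q" "deg_le Q k" and x: "x \<in> X" and n: "set_mset n \<subseteq> SX"
    and sz: "size n + 2 + k \<le> r"
  shows "W L Q (add_mset (x,a) (add_mset (x, \<not> a) n)) = 0"
proof -
  have n': "set_mset (add_mset (x,False) n) \<subseteq> SX" using n x by auto
  have "W L Q (add_mset (x,False) (add_mset (x,False) n)) + W L Q (add_mset (x,True) (add_mset (x,False) n))
      = W L Q (add_mset (x,False) n)"
    by (rule R2[OF Q x n']) (use sz in simp)
  moreover have "W L Q (add_mset (x,False) (add_mset (x,False) n)) = W L Q (add_mset (x,False) n)"
    by (rule R1[OF Q x n]) (use sz in simp)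
  ultimately have "W L Q (add_mset (x,True) (add_mset (x,False) n)) = 0" by simp
  then show ?thesis by (cases a) (auto simp: add_mset_commute)
qed

lemma cmono_expand: "cmono e (g1, g2, g3) = {#(ev1 e, g1), (ev2 e, g2), (ev3 e, g3)#}"
  by (simp add: cmono_def)

lemma R5:
  assumes Q: "poly_over SX Q" "deg_le Q k" and i: "i < length cs" and n: "set_mset n \<subseteq> SX"
    and sz: "size n + 6 + k \<le> r"
  shows "W L Q (cmono (cs ! i) g + cmono (cs ! i) g + n) = W L Q (cmono (cs ! i) g + n)"
proof -
  obtain g1 g2 g3 where g: "g = (g1, g2, g3)" by (cases g) auto
  define x1 where "x1 = ev1 (cs ! i)"
  define x2 where "x2 = ev2 (cs ! i)"
  define x3 where "x3 = ev3 (cs ! i)"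
  have X: "x1 \<in> X" "x2 \<in> X" "x3 \<in> X" using eq_ok_cs[OF i] by (auto simp: x1_def x2_def x3_def)
  have c: "cmono (cs ! i) g = {#(x1, g1), (x2, g2), (x3, g3)#}"
    by (simp add: g cmono_expand x1_def x2_def x3_def)
  have nn: "set_mset (add_mset (x2, g2) (add_mset (x2, g2) (add_mset (x3, g3) (add_mset (x3, g3) n)))) \<subseteq> SX"
    using X n by auto
  have s1: "W L Q (add_mset (x1, g1) (add_mset (x1, g1) (add_mset (x2, g2) (add_mset (x2, g2) (add_mset (x3, g3) (add_mset (x3, g3) n))))))
     = W L Q (add_mset (x1, g1) (add_mset (x2, g2) (add_mset (x2, g2) (add_mset (x3, g3) (add_mset (x3, g3) n)))))"
    by (rule R1[OF Q X(1) nn]) (use sz in simp)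
  have nn2: "set_mset (add_mset (x1, g1) (add_mset (x3, g3) (add_mset (x3, g3) n))) \<subseteq> SX"
    using X n by auto
  have s2: "W L Q (add_mset (x2, g2) (add_mset (x2, g2) (add_mset (x1, g1) (add_mset (x3, g3) (add_mset (x3, g3) n)))))
     = W L Q (add_mset (x2, g2) (add_mset (x1, g1) (add_mset (x3, g3) (add_mset (x3, g3) n))))"
    by (rule R1[OF Q X(2) nn2]) (use sz in simp)
  have nn3: "set_mset (add_mset (x1, g1) (add_mset (x2, g2) n)) \<subseteq> SX"
    using X n by auto
  have s3: "W L Q (add_mset (x3, g3) (add_mset (x3, g3) (add_mset (x1, g1) (add_mset (x2, g2) n))))
     = W L Q (add_mset (x3, g3) (add_mset (x1, g1) (add_mset (x2, g2) n)))"
    by (rule R1[OF Q X(3) nn3]) (use sz in simp)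
  show ?thesis using s1 s2 s3 by (simp add: c add_mset_commute)
qed

lemma R6:
  assumes Q: "poly_over SX Q" "deg_le Q k" and i: "i < length cs" and n: "set_mset n \<subseteq> SX"
    and sz: "size n + 6 + k \<le> r" and ne: "g \<noteq> g'"
  shows "W L Q (cmono (cs ! i) g + cmono (cs ! i) g' + n) = 0"
proof -
  obtain g1 g2 g3 where g: "g = (g1, g2, g3)" by (cases g) auto
  obtain h1 h2 h3 where g': "g' = (h1, h2, h3)" by (cases g') auto
  define x1 where "x1 = ev1 (cs ! i)"
  define x2 where "x2 = ev2 (cs ! i)"
  define x3 where "x3 = ev3 (cs ! i)"
  have X: "x1 \<in> X" "x2 \<in> X" "x3 \<in> X" using eq_ok_cs[OF i] by (auto simp: x1_def x2_def x3_def)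
  have c: "cmono (cs ! i) g + cmono (cs ! i) g' + n
      = {#(x1, g1), (x2, g2), (x3, g3), (x1, h1), (x2, h2), (x3, h3)#} + n"
    by (simp add: g g' cmono_expand x1_def x2_def x3_def)
  have "h1 = (\<not> g1) \<or> h2 = (\<not> g2) \<or> h3 = (\<not> g3)" using ne by (auto simp: g g')
  then show ?thesis
  proof (elim disjE)
    assume h: "h1 = (\<not> g1)"
    have nn: "set_mset ({#(x2, g2), (x3, g3), (x2, h2), (x3, h3)#} + n) \<subseteq> SX" using X n by auto
    have "W L Q (add_mset (x1, g1) (add_mset (x1, \<not> g1) ({#(x2, g2), (x3, g3), (x2, h2), (x3, h3)#} + n))) = 0"
      by (rule R4[OF Q X(1) nn]) (use sz in simp)
    then show ?thesis by (simp add: c h add_mset_commute)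
  next
    assume h: "h2 = (\<not> g2)"
    have nn: "set_mset ({#(x1, g1), (x3, g3), (x1, h1), (x3, h3)#} + n) \<subseteq> SX" using X n by auto
    have "W L Q (add_mset (x2, g2) (add_mset (x2, \<not> g2) ({#(x1, g1), (x3, g3), (x1, h1), (x3, h3)#} + n))) = 0"
      by (rule R4[OF Q X(2) nn]) (use sz in simp)
    then show ?thesis by (simp add: c h add_mset_commute)
  next
    assume h: "h3 = (\<not> g3)"
    have nn: "set_mset ({#(x1, g1), (x2, g2), (x1, h1), (x2, h2)#} + n) \<subseteq> SX" using X n by auto
    have "W L Q (add_mset (x3, g3) (add_mset (x3, \<not> g3) ({#(x1, g1), (x2, g2), (x1, h1), (x2, h2)#} + n))) = 0"
      by (rule R4[OF Q X(3) nn]) (use sz in simp)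
    then show ?thesis by (simp add: c h add_mset_commute)
  qed
qed

lemma R7:
  assumes Q: "poly_over SX Q" "deg_le Q k" and i: "i < length cs" and n: "set_mset n \<subseteq> SX"
    and sz: "size n + 4 + k \<le> r" and j: "j \<in> {1,2,3}"
  shows "W L Q (cmono (cs ! i) g + {#(evk (cs ! i) j, compk g j)#} + n) = W L Q (cmono (cs ! i) g + n)"
proof -
  obtain g1 g2 g3 where g: "g = (g1, g2, g3)" by (cases g) auto
  define x1 where "x1 = ev1 (cs ! i)"
  define x2 where "x2 = ev2 (cs ! i)"
  define x3 where "x3 = ev3 (cs ! i)"
  have X: "x1 \<in> X" "x2 \<in> X" "x3 \<in> X" using eq_ok_cs[OF i] by (auto simp: x1_def x2_def x3_def)
  have c: "cmono (cs ! i) g = {#(x1, g1), (x2, g2), (x3, g3)#}"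
    by (simp add: g cmono_expand x1_def x2_def x3_def)
  have e: "evk (cs ! i) 1 = x1" "evk (cs ! i) 2 = x2" "evk (cs ! i) 3 = x3"
    by (simp_all add: evk_def x1_def x2_def x3_def)
  have cp: "compk g 1 = g1" "compk g 2 = g2" "compk g 3 = g3"
    by (simp_all add: compk_def g)
  consider "j = 1" | "j = 2" | "j = 3" using j by auto
  then show ?thesis
  proof cases
    case 1
    have nn: "set_mset ({#(x2, g2), (x3, g3)#} + n) \<subseteq> SX" using X n by auto
    have "W L Q (add_mset (x1, g1) (add_mset (x1, g1) ({#(x2, g2), (x3, g3)#} + n)))
        = W L Q (add_mset (x1, g1) ({#(x2, g2), (x3, g3)#} + n))"
      by (rule R1[OF Q X(1) nn]) (use sz in simp)
    then show ?thesis using 1 by (simp only: e cp c) (simp add: add_mset_commute)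
  next
    case 2
    have nn: "set_mset ({#(x1, g1), (x3, g3)#} + n) \<subseteq> SX" using X n by auto
    have "W L Q (add_mset (x2, g2) (add_mset (x2, g2) ({#(x1, g1), (x3, g3)#} + n)))
        = W L Q (add_mset (x2, g2) ({#(x1, g1), (x3, g3)#} + n))"
      by (rule R1[OF Q X(2) nn]) (use sz in simp)
    then show ?thesis using 2 by (simp only: e cp c) (simp add: add_mset_commute)
  next
    case 3
    have nn: "set_mset ({#(x1, g1), (x2, g2)#} + n) \<subseteq> SX" using X n by auto
    have "W L Q (add_mset (x3, g3) (add_mset (x3, g3) ({#(x1, g1), (x2, g2)#} + n)))
        = W L Q (add_mset (x3, g3) ({#(x1, g1), (x2, g2)#} + n))"
      by (rule R1[OF Q X(3) nn]) (use sz in simp)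
    then show ?thesis using 3 by (simp only: e cp c) (simp add: add_mset_commute)
  qed
qed

end


fun phi :: "'x xor_eq list \<Rightarrow> 'x gvert \<times> 'x gvert \<Rightarrow> ('x \<times> bool) multiset option" where
  "phi cs (VarV x c, VarV y c') = (if x = y then Some {#(x, c \<noteq> c')#} else None)"
| "phi cs (ConV i a, ConV j b) = (if i = j then Some (cmono (cs ! i) (xor3 a b)) else None)"
| "phi cs (VarV x c, ConV j b) = None"
| "phi cs (ConV i a, VarV y c) = None"

lemma phi_size: "phi cs v = Some M \<Longrightarrow> size M \<le> 3"
proof (cases v)
  case (Pair u w)
  assume "phi cs v = Some M"
  then show ?thesis using Pair by (cases u; cases w) (auto simp: cmono_def split: if_splits)
qed

lemma sum_xor_left:
  "(\<Sum>b\<in>{b. par b = p}. f (xor3 a b)) = (\<Sum>g\<in>{g. par g = (par a \<noteq> p)}. f g)"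
  by (rule sum.reindex_bij_witness[where i="xor3 a" and j="xor3 a"]) (auto simp: par_xor3)

lemma sum_xor_right:
  "(\<Sum>a\<in>{a. par a = q}. f (xor3 a b)) = (\<Sum>g\<in>{g. par g = (q \<noteq> par b)}. f g)"
  by (rule sum.reindex_bij_witness[where i="\<lambda>g. xor3 g b" and j="\<lambda>a. xor3 a b"]) (auto simp: par_xor3)

lemma finite_gc_verts: "finite X \<Longrightarrow> finite (gc_verts X cs)"
proof -
  assume fX: "finite X"
  have "gc_verts X cs \<subseteq> (\<lambda>(x,a). VarV x a) ` (X \<times> UNIV) \<union> (\<lambda>(i,a). ConV i a) ` ({..<length cs} \<times> UNIV)"
    by (auto simp: gc_verts_def)
  moreover have "finite ((\<lambda>(x,a). VarV x a) ` (X \<times> UNIV) \<union> (\<lambda>(i,a). ConV i a) ` ({..<length cs} \<times> (UNIV :: (bool \<times> bool \<times> bool) set)))"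
    using fX by auto
  ultimately show ?thesis by (rule finite_subset)
qed

lemma edges_raw:
  assumes "e \<in> gc_edges X cs"
  shows "((\<exists>x. e = {VarV x False, VarV x True} \<and> x \<in> X) \<or>
     (\<exists>i a b. e = {ConV i a, ConV i b} \<and> i < length cs \<and> sat3 (cs ! i) a \<and> sat3 (cs ! i) b \<and> a \<noteq> b)) \<or>
     (\<exists>i a1 a2 a3 y c. e = {ConV i (a1, a2, a3), VarV y c} \<and> i < length cs \<and> sat3 (cs ! i) (a1, a2, a3) \<and>
      ((y, c) = (ev1 (cs ! i), a1) \<or> (y, c) = (ev2 (cs ! i), a2) \<or> (y, c) = (ev3 (cs ! i), a3)))"
  using assms by (simp only: gc_edges_def Un_iff mem_Collect_eq)

lemma edges_two: "e \<in> gc_edges X cs \<Longrightarrow> \<exists>a b. a \<noteq> b \<and> e = {a, b}"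
proof -
  assume "e \<in> gc_edges X cs"
  from edges_raw[OF this] consider
      (c1) "\<exists>x. e = {VarV x False, VarV x True} \<and> x \<in> X"
    | (c2) "\<exists>i a b. e = {ConV i a, ConV i b} \<and> i < length cs \<and> sat3 (cs ! i) a \<and> sat3 (cs ! i) b \<and> a \<noteq> b"
    | (c3) "\<exists>i a1 a2 a3 y c. e = {ConV i (a1, a2, a3), VarV y c} \<and> i < length cs \<and> sat3 (cs ! i) (a1, a2, a3) \<and>
      ((y, c) = (ev1 (cs ! i), a1) \<or> (y, c) = (ev2 (cs ! i), a2) \<or> (y, c) = (ev3 (cs ! i), a3))"
    by argo
  then show ?thesis
  proof cases
    case c1
    then obtain x where "e = {VarV x False, VarV x True}" by (elim exE conjE) (rule that; assumption)
    then show ?thesis by (intro exI[of _ "VarV x False"] exI[of _ "VarV x True"]) simp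
  next
    case c2
    then obtain i a b where "e = {ConV i a, ConV i b}" "a \<noteq> b" by (elim exE conjE) (rule that; assumption)
    then show ?thesis by (intro exI[of _ "ConV i a"] exI[of _ "ConV i b"]) simp
  next
    case c3
    then obtain i a y c where "e = {ConV i a, VarV y c}" by (elim exE conjE) (rule that; assumption)
    then show ?thesis by (intro exI[of _ "ConV i a"] exI[of _ "VarV y c"]) simp
  qed
qed

lemma edges_sub:
  assumes ok: "\<forall>e\<in>set cs. eq_ok X e" and e: "e \<in> gc_edges X cs"
  shows "e \<subseteq> gc_verts X cs"
proof -
  obtain a b where ab: "e = {a, b}" using edges_two[OF e] by blast
  have E: "{a, b} \<in> gc_edges X cs" using e ab by simp
  have okc: "ev1 (cs ! i) \<in> X \<and> ev2 (cs ! i) \<in> X \<and> ev3 (cs ! i) \<in> X" if "i < length cs" for i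
  proof -
    have "eq_ok X (cs ! i)" using ok that by simp
    then show ?thesis by (cases "cs ! i") auto
  qed
  have "a \<in> gc_verts X cs \<and> b \<in> gc_verts X cs"
    using E[unfolded edge_iff]
  proof (elim disjE exE conjE)
    fix x c assume "x \<in> X" "a = VarV x c" "b = VarV x (\<not> c)"
    then show ?thesis by simp
  next
    fix i a' a'' assume "i < length cs" "sat3 (cs ! i) a'" "sat3 (cs ! i) a''" "a = ConV i a'" "b = ConV i a''"
    then show ?thesis by simp
  next
    fix i a' k assume h: "i < length cs" "sat3 (cs ! i) a'" "k \<in> {1,2,3}" "a = ConV i a'"
      "b = VarV (evk (cs ! i) k) (compk a' k)"
    then show ?thesis using okc[OF h(1)] by (auto simp: evk_def)
  next
    fix i a' k assume h: "i < length cs" "sat3 (cs ! i) a'" "k \<in> {1,2,3}" "b = ConV i a'"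
      "a = VarV (evk (cs ! i) k) (compk a' k)"
    then show ?thesis using okc[OF h(1)] by (auto simp: evk_def)
  qed
  then show ?thesis using ab by simp
qed

lemma finite_gc_edges: "finite X \<Longrightarrow> \<forall>e\<in>set cs. eq_ok X e \<Longrightarrow> finite (gc_edges X cs)"
  by (rule finite_subset[of _ "Pow (gc_verts X cs)"]) (auto dest: edges_sub simp: finite_gc_verts)

lemma card_ordered:
  assumes fE: "finite E" and two: "\<And>e. e \<in> E \<Longrightarrow> \<exists>a b. a \<noteq> b \<and> e = {a, b}"
  shows "card {(u, u'). {u, u'} \<in> E} = 2 * card E"
proof -
  have eq: "{(u, u'). {u, u'} \<in> E} = (\<Union>e\<in>E. {(u, u'). {u, u'} = e})" by auto
  have c2: "card {(u, u'). {u, u'} = e} = 2" if e_in: "e \<in> E" for e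
  proof -
    obtain a b where ab: "a \<noteq> b" "e = {a, b}" using two[OF e_in] by blast
    have "{(u, u'). {u, u'} = e} = {(a, b), (b, a)}" using ab by (auto simp: doubleton_eq_iff)
    then show ?thesis using ab by simp
  qed
  have fin: "finite {(u, u'). {u, u'} = e}" if "e \<in> E" for e
    using c2[OF that] card.infinite by fastforce
  have "card (\<Union>e\<in>E. {(u, u'). {u, u'} = e}) = (\<Sum>e\<in>E. card {(u, u'). {u, u'} = e})"
    by (rule card_UN_disjoint[OF fE]) (use fin in auto)
  also have "\<dots> = (\<Sum>e\<in>E. 2)" using c2 by simp
  finally show ?thesis using eq by simp
qed

lemma evk_inj:
  assumes "ev1 e \<noteq> ev2 e" "ev1 e \<noteq> ev3 e" "ev2 e \<noteq> ev3 e" "j \<in> {1,2,3}" "j' \<in> {1,2,3}"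
    "evk e j = evk e j'"
  shows "j = j'"
  using assms by (auto simp: evk_def)

lemma compk_xor3: "compk (xor3 a b) j = (compk a j \<noteq> compk b j)"
  by (cases a; cases b) (auto simp: compk_def)


lemma dfd_add_mset[simp]: "dfd f (add_mset v m) \<longleftrightarrow> f v \<noteq> None \<and> dfd f m"
  by (simp add: dfd_def)

lemma img_add_mset[simp]: "img f (add_mset v m) = the (f v) + img f m"
  by (simp add: img_def)

context xctx
begin

definition hW :: "('x \<times> bool) rpoly \<Rightarrow> ('x gvert \<times> 'x gvert) multiset \<Rightarrow> real" where
  "hW Q a = (if dfd (phi cs) a then W L Q (img (phi cs) a) else 0)"

lemma hW_single: "hW Q {#p#} = (case phi cs p of None \<Rightarrow> 0 | Some M \<Rightarrow> W L Q M)"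
  by (auto simp: hW_def split: option.split)

lemma hW_pair: "hW Q {#p, p'#} = (case phi cs p of None \<Rightarrow> 0 | Some M \<Rightarrow>
    (case phi cs p' of None \<Rightarrow> 0 | Some M' \<Rightarrow> W L Q (M + M')))"
  by (auto simp: hW_def split: option.split)

lemma finVG: "finite (gc_verts X cs)" using inst finite_gc_verts by (auto simp: xor3_instance_def)
lemma finVH: "finite (gc_verts X (homog cs))" using inst finite_gc_verts by (auto simp: xor3_instance_def)

lemma R2': 
  assumes Q: "poly_over SX Q" "deg_le Q k" and x: "x \<in> X" and sz: "1 + k \<le> r"
  shows "W L Q {#(x, c \<noteq> False)#} + W L Q {#(x, c \<noteq> True)#} = W L Q {#}"
proof -
  have "W L Q (add_mset (x,False) {#}) + W L Q (add_mset (x,True) {#}) = W L Q {#}"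
    by (rule R2[OF Q x]) (use sz in auto)
  then show ?thesis by (cases c) auto
qed

lemma R3':
  assumes Q: "poly_over SX Q" "deg_le Q k" and i: "i < length cs" and sz: "3 + k \<le> r"
    and a: "par a = rhs (cs ! i)"
  shows "(\<Sum>g\<in>{g. par g = (par a \<noteq> False)}. W L Q (cmono (cs ! i) g)) = W L Q {#}"
proof -
  have "(\<Sum>g\<in>{g. sat3 (cs ! i) g}. W L Q (cmono (cs ! i) g + {#})) = W L Q {#}"
    by (rule R3[OF Q]) (use i sz in auto)
  moreover have "{g. sat3 (cs ! i) g} = {g. par g = (par a \<noteq> False)}"
    using a by (auto simp: sat3_par)
  ultimately show ?thesis by simp
qed

lemma row_sum:
  assumes Q: "poly_over SX Q" "deg_le Q k" and sz: "3 + k \<le> r" and u: "u \<in> gc_verts X cs"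
  shows "(\<Sum>v\<in>gc_verts X (homog cs). hW Q {#(u, v)#}) = W L Q {#}"
proof (cases u)
  case (VarV x c)
  have x: "x \<in> X" using u VarV by simp
  let ?D = "{VarV x False, VarV x True}"
  have "(\<Sum>v\<in>gc_verts X (homog cs). hW Q {#(u, v)#}) = (\<Sum>v\<in>?D. hW Q {#(u, v)#})"
  proof (rule sum.mono_neutral_right[OF finVH])
    show "?D \<subseteq> gc_verts X (homog cs)" using x by simp
    show "\<forall>v\<in>gc_verts X (homog cs) - ?D. hW Q {#(u, v)#} = 0"
    proof
      fix v assume "v \<in> gc_verts X (homog cs) - ?D"
      then show "hW Q {#(u, v)#} = 0" using VarV
        by (cases v) (auto simp: hW_single)
    qed
  qed
  also have "\<dots> = W L Q {#(x, c \<noteq> False)#} + W L Q {#(x, c \<noteq> True)#}"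
    using VarV by (simp add: hW_single)
  also have "\<dots> = W L Q {#}" by (rule R2'[OF Q x]) (use sz in simp)
  finally show ?thesis .
next
  case (ConV i a)
  have i: "i < length cs" and a: "sat3 (cs ! i) a" using u ConV by auto
  let ?B = "{b. par b = False}"
  let ?D = "ConV i ` ?B"
  have "(\<Sum>v\<in>gc_verts X (homog cs). hW Q {#(u, v)#}) = (\<Sum>v\<in>?D. hW Q {#(u, v)#})"
  proof (rule sum.mono_neutral_right[OF finVH])
    show "?D \<subseteq> gc_verts X (homog cs)" using i by (auto simp: sat_homog)
    show "\<forall>v\<in>gc_verts X (homog cs) - ?D. hW Q {#(u, v)#} = 0"
    proof
      fix v assume v: "v \<in> gc_verts X (homog cs) - ?D"
      show "hW Q {#(u, v)#} = 0"
      proof (cases v)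
        case (VarV y c) then show ?thesis using ConV by (simp add: hW_single)
      next
        case (ConV j b)
        then show ?thesis using v \<open>u = ConV i a\<close> i by (auto simp: hW_single sat_homog)
      qed
    qed
  qed
  also have "\<dots> = (\<Sum>b\<in>?B. hW Q {#(u, ConV i b)#})"
    by (simp add: sum.reindex inj_on_def)
  also have "\<dots> = (\<Sum>b\<in>?B. W L Q (cmono (cs ! i) (xor3 a b)))"
    using ConV by (simp add: hW_single)
  also have "\<dots> = (\<Sum>g\<in>{g. par g = (par a \<noteq> False)}. W L Q (cmono (cs ! i) g))"
    by (rule sum_xor_left)
  also have "\<dots> = W L Q {#}"
    by (rule R3'[OF Q i sz]) (use a in \<open>simp add: sat3_par\<close>)
  finally show ?thesis .
qed

lemma col_sum:
  assumes Q: "poly_over SX Q" "deg_le Q k" and sz: "3 + k \<le> r" and v: "v \<in> gc_verts X (homog cs)"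
  shows "(\<Sum>u\<in>gc_verts X cs. hW Q {#(u, v)#}) = W L Q {#}"
proof (cases v)
  case (VarV x c)
  have x: "x \<in> X" using v VarV by simp
  let ?D = "{VarV x False, VarV x True}"
  have "(\<Sum>u\<in>gc_verts X cs. hW Q {#(u, v)#}) = (\<Sum>u\<in>?D. hW Q {#(u, v)#})"
  proof (rule sum.mono_neutral_right[OF finVG])
    show "?D \<subseteq> gc_verts X cs" using x by simp
    show "\<forall>u\<in>gc_verts X cs - ?D. hW Q {#(u, v)#} = 0"
    proof
      fix u assume "u \<in> gc_verts X cs - ?D"
      then show "hW Q {#(u, v)#} = 0" using VarV
        by (cases u) (auto simp: hW_single)
    qed
  qed
  also have "\<dots> = W L Q {#(x, c \<noteq> False)#} + W L Q {#(x, c \<noteq> True)#}"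
    using VarV by (cases c) (auto simp: hW_single)
  also have "\<dots> = W L Q {#}" by (rule R2'[OF Q x]) (use sz in simp)
  finally show ?thesis .
next
  case (ConV i b)
  have i: "i < length cs" and b: "par b = False" using v ConV by (auto simp: sat_homog)
  let ?A = "{a. par a = rhs (cs ! i)}"
  let ?D = "ConV i ` ?A"
  have "(\<Sum>u\<in>gc_verts X cs. hW Q {#(u, v)#}) = (\<Sum>u\<in>?D. hW Q {#(u, v)#})"
  proof (rule sum.mono_neutral_right[OF finVG])
    show "?D \<subseteq> gc_verts X cs" using i by (auto simp: sat3_par)
    show "\<forall>u\<in>gc_verts X cs - ?D. hW Q {#(u, v)#} = 0"
    proof
      fix u assume u: "u \<in> gc_verts X cs - ?D"
      show "hW Q {#(u, v)#} = 0"
      proof (cases u)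
        case (VarV y c) then show ?thesis using ConV by (simp add: hW_single)
      next
        case (ConV j a)
        then show ?thesis using u \<open>v = ConV i b\<close> i by (auto simp: hW_single sat3_par)
      qed
    qed
  qed
  also have "\<dots> = (\<Sum>a\<in>?A. hW Q {#(ConV i a, v)#})"
    by (simp add: sum.reindex inj_on_def)
  also have "\<dots> = (\<Sum>a\<in>?A. W L Q (cmono (cs ! i) (xor3 a b)))"
    using ConV by (simp add: hW_single)
  also have "\<dots> = (\<Sum>g\<in>{g. par g = (rhs (cs ! i) \<noteq> par b)}. W L Q (cmono (cs ! i) g))"
    by (rule sum_xor_right)
  also have "\<dots> = (\<Sum>g\<in>{g. sat3 (cs ! i) g}. W L Q (cmono (cs ! i) g + {#}))"
    using b by (simp add: sat3_par)
  also have "\<dots> = W L Q {#}"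
    by (rule R3[OF Q]) (use i sz in auto)
  finally show ?thesis .
qed

lemma bool_sum:
  assumes Q: "poly_over SX Q" "deg_le Q k" and sz: "6 + k \<le> r"
    and u: "u \<in> gc_verts X cs" and v: "v \<in> gc_verts X (homog cs)" and M: "phi cs (u, v) = Some M"
  shows "W L Q (M + M) = W L Q M"
proof (cases u)
  case (VarV x c)
  then obtain c' where v': "v = VarV x c'" "M = {#(x, c \<noteq> c')#}" using M
    by (cases v) (auto split: if_splits)
  have x: "x \<in> X" using u VarV by simp
  have "W L Q (add_mset (x, c \<noteq> c') (add_mset (x, c \<noteq> c') {#})) = W L Q (add_mset (x, c \<noteq> c') {#})"
    by (rule R1[OF Q x]) (use sz in auto)
  then show ?thesis using v' by simp
next
  case (ConV i a)
  then obtain b where v': "v = ConV i b" "M = cmono (cs ! i) (xor3 a b)" using M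
    by (cases v) (auto split: if_splits)
  have i: "i < length cs" using u ConV by simp
  have "W L Q (cmono (cs ! i) (xor3 a b) + cmono (cs ! i) (xor3 a b) + {#}) = W L Q (cmono (cs ! i) (xor3 a b) + {#})"
    by (rule R5[OF Q i]) (use sz in auto)
  then show ?thesis using v' by simp
qed

end


lemma sum_restrict:
  assumes "finite T" "D \<subseteq> T" "\<And>p. p \<in> T \<Longrightarrow> f p \<noteq> 0 \<Longrightarrow> p \<in> D"
  shows "sum f T = sum f D"
  by (rule sum.mono_neutral_right) (use assms in auto)

lemma xor3_cancel: "xor3 a b = xor3 a' b \<Longrightarrow> a = a'"
  by (metis xor3_inv2)

lemma edge_neq: "{v, v'} \<in> gc_edges X cs \<Longrightarrow> v \<noteq> v'"
  using edges_two[of "{v, v'}" X cs] by (auto simp: doubleton_eq_iff)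

context xctx
begin

abbreviation "EHo \<equiv> {(v, v'). {v, v'} \<in> gc_edges X (homog cs)}"

lemma ok_cs: "\<forall>e\<in>set cs. eq_ok X e" using inst by (simp add: xor3_instance_def)

lemma ok_homog: "\<forall>e\<in>set (homog cs). eq_ok X e"
proof
  fix e assume "e \<in> set (homog cs)"
  then obtain e0 where "e0 \<in> set cs" and "e = (case e0 of (x1, x2, x3, b) \<Rightarrow> (x1, x2, x3, False))"
    by (auto simp: homog_def)
  moreover have "eq_ok X e0" using ok_cs \<open>e0 \<in> set cs\<close> by blast
  moreover obtain x1 x2 x3 b where "e0 = (x1, x2, x3, b)" by (cases e0) auto
  ultimately show "eq_ok X e" by simp
qed

lemma finEH: "finite (gc_edges X (homog cs))"
  using finite_gc_edges[OF _ ok_homog] inst by (simp add: xor3_instance_def)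

lemma finEG: "finite (gc_edges X cs)"
  using finite_gc_edges[OF _ ok_cs] inst by (simp add: xor3_instance_def)

lemma EH_verts: "{v, v'} \<in> gc_edges X (homog cs) \<Longrightarrow> v \<in> gc_verts X (homog cs) \<and> v' \<in> gc_verts X (homog cs)"
  using edges_sub[OF ok_homog] by blast

lemma finEHo: "finite EHo"
proof (rule finite_subset)
  show "EHo \<subseteq> gc_verts X (homog cs) \<times> gc_verts X (homog cs)" using EH_verts by auto
  show "finite (gc_verts X (homog cs) \<times> gc_verts X (homog cs))" using finVH by simp
qed

lemma edge_sum_swap:
  "(\<Sum>p\<in>EHo. hW Q {#(u, fst p), (u', snd p)#}) = (\<Sum>p\<in>EHo. hW Q {#(u', fst p), (u, snd p)#})"
  by (rule sum.reindex_bij_witness[where i="\<lambda>(a,b). (b,a)" and j="\<lambda>(a,b). (b,a)"])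
     (auto simp: insert_commute add_mset_commute)

lemma edge_sum_A:
  assumes Q: "poly_over SX Q" "deg_le Q k" and sz: "6 + k \<le> r" and x: "x \<in> X"
  shows "(\<Sum>p\<in>EHo. hW Q {#(VarV x c, fst p), (VarV x (\<not> c), snd p)#}) = W L Q {#}"
proof -
  let ?f = "\<lambda>p. hW Q {#(VarV x c, fst p), (VarV x (\<not> c), snd p)#}"
  let ?D = "{(VarV x False, VarV x True), (VarV x True, VarV x False)}"
  have "sum ?f EHo = sum ?f ?D"
  proof (rule sum_restrict[OF finEHo])
    show "?D \<subseteq> EHo"
    proof -
      have "{VarV x False, VarV x True} \<in> gc_edges X (homog cs)"
        unfolding edge_iff using x by (intro disjI1 exI[of _ x] exI[of _ False]) simp
      then show ?thesis by (auto simp: insert_commute)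
    qed
  next
    fix p assume p: "p \<in> EHo" "?f p \<noteq> 0"
    obtain v v' where vv: "p = (v, v')" by (cases p)
    have e: "{v, v'} \<in> gc_edges X (homog cs)" using p vv by simp
    obtain c2 where v: "v = VarV x c2" using p(2) vv
      by (cases v) (auto simp: hW_pair split: if_splits)
    obtain c3 where v': "v' = VarV x c3" using p(2) vv v
      by (cases v') (auto simp: hW_pair split: if_splits)
    have "c2 \<noteq> c3" using edge_neq[OF e] v v' by auto
    then show "p \<in> ?D" using vv v v' by (cases c2; cases c3) auto
  qed
  also have "\<dots> = W L Q {#(x, c \<noteq> False)#} + W L Q {#(x, c \<noteq> True)#}"
  proof -
    have r1: "W L Q (add_mset (x, b) (add_mset (x, b) {#})) = W L Q (add_mset (x, b) {#})" for b
      by (rule R1[OF Q x]) (use sz in auto)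
    show ?thesis using r1[of c] r1[of "\<not> c"] by (cases c) (auto simp: hW_pair)
  qed
  also have "\<dots> = W L Q {#}" by (rule R2'[OF Q x]) (use sz in simp)
  finally show ?thesis .
qed

lemma edge_sum_B:
  assumes Q: "poly_over SX Q" "deg_le Q k" and sz: "6 + k \<le> r" and i: "i < length cs"
    and a: "sat3 (cs ! i) a" and a': "sat3 (cs ! i) a'" and aa: "a \<noteq> a'"
  shows "(\<Sum>p\<in>EHo. hW Q {#(ConV i a, fst p), (ConV i a', snd p)#}) = W L Q {#}"
proof -
  let ?f = "\<lambda>p. hW Q {#(ConV i a, fst p), (ConV i a', snd p)#}"
  let ?B = "{b. par b = False}"
  let ?g = "\<lambda>b. (ConV i b, ConV i (xor3 a' (xor3 a b)))"
  let ?D = "?g ` ?B"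
  have pa: "par a = rhs (cs ! i)" "par a' = rhs (cs ! i)" using a a' by (auto simp: sat3_par)
  have "sum ?f EHo = sum ?f ?D"
  proof (rule sum_restrict[OF finEHo])
    show "?D \<subseteq> EHo"
    proof
      fix p :: "'x gvert \<times> 'x gvert" assume "p \<in> ?D"
      then obtain b where b: "par b = False" "p = ?g b" by auto
      have pb': "par (xor3 a' (xor3 a b)) = False" using b(1) pa by (simp add: par_xor3)
      have ne: "b \<noteq> xor3 a' (xor3 a b)"
      proof
        assume "b = xor3 a' (xor3 a b)"
        then have "xor3 a' b = xor3 a b" by (metis xor3_inv)
        then show False using aa xor3_cancel by metis
      qed
      have "{ConV i b, ConV i (xor3 a' (xor3 a b))} \<in> gc_edges X (homog cs)"
        unfolding edge_iff using i b(1) pb' ne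
        by (intro disjI2 disjI1 exI[of _ i] exI[of _ b] exI[of _ "xor3 a' (xor3 a b)"]) (simp add: sat_homog)
      then show "p \<in> EHo" using b(2) by simp
    qed
  next
    fix p assume p: "p \<in> EHo" "?f p \<noteq> 0"
    obtain v v' where vv: "p = (v, v')" by (cases p)
    have e: "{v, v'} \<in> gc_edges X (homog cs)" using p vv by simp
    obtain b where v: "v = ConV i b" using p(2) vv
      by (cases v) (auto simp: hW_pair split: if_splits)
    obtain b' where v': "v' = ConV i b'" using p(2) vv v
      by (cases v') (auto simp: hW_pair split: if_splits)
    have pb: "par b = False" using EH_verts[OF e] v i by (simp add: sat_homog)
    have "xor3 a b = xor3 a' b'"
    proof (rule ccontr)
      assume ne: "xor3 a b \<noteq> xor3 a' b'"
      have "W L Q (cmono (cs ! i) (xor3 a b) + cmono (cs ! i) (xor3 a' b') + {#}) = 0"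
        by (rule R6[OF Q i _ _ ne]) (use sz in auto)
      then show False using p(2) vv v v' by (simp add: hW_pair)
    qed
    then have "b' = xor3 a' (xor3 a b)" by (metis xor3_inv)
    then show "p \<in> ?D" using vv v v' pb by auto
  qed
  also have "\<dots> = (\<Sum>b\<in>?B. ?f (?g b))"
    by (subst sum.reindex) (auto simp: inj_on_def)
  also have "\<dots> = (\<Sum>b\<in>?B. W L Q (cmono (cs ! i) (xor3 a b)))"
  proof (rule sum.cong[OF refl])
    fix b
    have "W L Q (cmono (cs ! i) (xor3 a b) + cmono (cs ! i) (xor3 a b) + {#}) = W L Q (cmono (cs ! i) (xor3 a b) + {#})"
      by (rule R5[OF Q i]) (use sz in auto)
    then show "?f (?g b) = W L Q (cmono (cs ! i) (xor3 a b))" by (simp add: hW_pair)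
  qed
  also have "\<dots> = (\<Sum>g\<in>{g. par g = (par a \<noteq> False)}. W L Q (cmono (cs ! i) g))"
    by (rule sum_xor_left)
  also have "\<dots> = W L Q {#}"
    by (rule R3'[OF Q i]) (use sz pa in auto)
  finally show ?thesis .
qed

lemma edge_sum_C:
  assumes Q: "poly_over SX Q" "deg_le Q k" and sz: "6 + k \<le> r" and i: "i < length cs"
    and a: "sat3 (cs ! i) a" and j: "j \<in> {1,2,3}"
  shows "(\<Sum>p\<in>EHo. hW Q {#(ConV i a, fst p), (VarV (evk (cs ! i) j) (compk a j), snd p)#}) = W L Q {#}"
proof -
  let ?y = "evk (cs ! i) j"
  let ?f = "\<lambda>p. hW Q {#(ConV i a, fst p), (VarV ?y (compk a j), snd p)#}"
  let ?B = "{b. par b = False}"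
  let ?g = "\<lambda>b. (ConV i b, VarV ?y (compk b j))"
  let ?D = "?g ` ?B"
  have pa: "par a = rhs (cs ! i)" using a by (auto simp: sat3_par)
  have okc: "ev1 (cs ! i) \<noteq> ev2 (cs ! i)" "ev1 (cs ! i) \<noteq> ev3 (cs ! i)" "ev2 (cs ! i) \<noteq> ev3 (cs ! i)"
    using eq_ok_cs[OF i] by auto
  have "sum ?f EHo = sum ?f ?D"
  proof (rule sum_restrict[OF finEHo])
    show "?D \<subseteq> EHo"
    proof
      fix p :: "'x gvert \<times> 'x gvert" assume "p \<in> ?D"
      then obtain b where b: "par b = False" "p = ?g b" by auto
      have "{ConV i b, VarV (evk (homog cs ! i) j) (compk b j)} \<in> gc_edges X (homog cs)"
        unfolding edge_iff using i b(1) j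
        by (intro disjI2 exI[of _ i] exI[of _ b] exI[of _ j]) (simp add: sat_homog)
      then show "p \<in> EHo" using b(2) i by simp
    qed
  next
    fix p assume p: "p \<in> EHo" "?f p \<noteq> 0"
    obtain v v' where vv: "p = (v, v')" by (cases p)
    have e: "{v, v'} \<in> gc_edges X (homog cs)" using p vv by simp
    obtain b where v: "v = ConV i b" using p(2) vv
      by (cases v) (auto simp: hW_pair split: if_splits)
    obtain c' where v': "v' = VarV ?y c'" using p(2) vv v
      by (cases v') (auto simp: hW_pair split: if_splits)
    have pb: "par b = False" using EH_verts[OF e] v i by (simp add: sat_homog)
    have "c' = compk b j"
      using e[unfolded edge_iff]
    proof (elim disjE exE conjE)
      fix x c assume "x \<in> X" "v = VarV x c" "v' = VarV x (\<not> c)"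
      then show ?thesis using v by simp
    next
      fix i2 b1 b2 assume "v' = ConV i2 b2"
      then show ?thesis using v' by simp
    next
      fix i2 b2 j2 assume h: "i2 < length (homog cs)" "j2 \<in> {1,2,3}" "v = ConV i2 b2"
        "v' = VarV (evk (homog cs ! i2) j2) (compk b2 j2)"
      then have "i2 = i" "b2 = b" "?y = evk (cs ! i) j2" "c' = compk b j2" using v v' by auto
      then have "j2 = j" using evk_inj[OF okc h(2) j] by simp
      then show ?thesis using \<open>c' = compk b j2\<close> by simp
    next
      fix i2 b2 j2 assume "v' = ConV i2 b2"
      then show ?thesis using v' by simp
    qed
    then show "p \<in> ?D" using vv v v' pb by auto
  qed
  also have "\<dots> = (\<Sum>b\<in>?B. ?f (?g b))"
    by (subst sum.reindex) (auto simp: inj_on_def)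
  also have "\<dots> = (\<Sum>b\<in>?B. W L Q (cmono (cs ! i) (xor3 a b)))"
  proof (rule sum.cong[OF refl])
    fix b
    have "W L Q (cmono (cs ! i) (xor3 a b) + {#(?y, compk (xor3 a b) j)#} + {#}) = W L Q (cmono (cs ! i) (xor3 a b) + {#})"
      by (rule R7[OF Q i _ _ j]) (use sz in auto)
    then show "?f (?g b) = W L Q (cmono (cs ! i) (xor3 a b))"
      by (simp add: hW_pair compk_xor3)
  qed
  also have "\<dots> = (\<Sum>g\<in>{g. par g = (par a \<noteq> False)}. W L Q (cmono (cs ! i) g))"
    by (rule sum_xor_left)
  also have "\<dots> = W L Q {#}"
    by (rule R3'[OF Q i]) (use sz pa in auto)
  finally show ?thesis .
qed

lemma edge_sum:
  assumes Q: "poly_over SX Q" "deg_le Q k" and sz: "6 + k \<le> r" and e: "{u, u'} \<in> gc_edges X cs"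
  shows "(\<Sum>p\<in>EHo. hW Q {#(u, fst p), (u', snd p)#}) = W L Q {#}"
  using e[unfolded edge_iff]
proof (elim disjE exE conjE)
  fix x c assume "x \<in> X" "u = VarV x c" "u' = VarV x (\<not> c)"
  then show ?thesis using edge_sum_A[OF Q sz] by simp
next
  fix i a a' assume "i < length cs" "sat3 (cs ! i) a" "sat3 (cs ! i) a'" "a \<noteq> a'" "u = ConV i a" "u' = ConV i a'"
  then show ?thesis using edge_sum_B[OF Q sz] by simp
next
  fix i a j assume "i < length cs" "sat3 (cs ! i) a" "j \<in> {1,2,3}" "u = ConV i a"
    "u' = VarV (evk (cs ! i) j) (compk a j)"
  then show ?thesis using edge_sum_C[OF Q sz] by simp
next
  fix i a j assume "i < length cs" "sat3 (cs ! i) a" "j \<in> {1,2,3}" "u' = ConV i a"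
    "u = VarV (evk (cs ! i) j) (compk a j)"
  then show ?thesis using edge_sum_C[OF Q sz, of i a j] edge_sum_swap[of Q u u'] by simp
qed

end


lemma deg_lower2:
  assumes fg: "finite (supp g)" and fq: "finite (supp q)"
    and a0: "g a0 \<noteq> 0" and dg: "deg_le g (size a0)"
    and d: "deg_le (pmul g q) d" and b: "q b \<noteq> 0"
  shows "size a0 \<le> d"
proof -
  define l where "l = Max (size ` supp q)"
  have "l \<in> size ` supp q" unfolding l_def using fq b by (intro Max_in) auto
  then obtain b0 where b0: "q b0 \<noteq> 0" "size b0 = l" by auto
  have dq: "deg_le q (size b0)" unfolding deg_le_def b0(2) l_def using fq by auto
  obtain m where "size m = size a0 + size b0" "pmul g q m \<noteq> 0"
    using pmul_lead[OF fg fq a0 b0(1) dg dq] by blast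
  then show ?thesis using d by (auto simp: deg_le_def)
qed

lemma sum_lin_comb:
  assumes fF: "finite F" and fG: "finite G" and sub: "f ` G \<subseteq> F" and e: "{#} \<in> F"
  shows "(\<Sum>a\<in>F. (s * (\<Sum>\<gamma>\<in>G. mon (f \<gamma>) a) - c * mon {#} a) * h a)
       = s * (\<Sum>\<gamma>\<in>G. h (f \<gamma>)) - c * h {#}"
proof -
  have "(\<Sum>a\<in>F. (s * (\<Sum>\<gamma>\<in>G. mon (f \<gamma>) a) - c * mon {#} a) * h a)
      = s * (\<Sum>a\<in>F. (\<Sum>\<gamma>\<in>G. mon (f \<gamma>) a) * h a) - c * (\<Sum>a\<in>F. mon {#} a * h a)"
  proof -
    have "(\<Sum>a\<in>F. (s * (\<Sum>\<gamma>\<in>G. mon (f \<gamma>) a) - c * mon {#} a) * h a)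
        = (\<Sum>a\<in>F. s * ((\<Sum>\<gamma>\<in>G. mon (f \<gamma>) a) * h a) - c * (mon {#} a * h a))"
      by (intro sum.cong refl) (simp add: algebra_simps)
    also have "\<dots> = s * (\<Sum>a\<in>F. (\<Sum>\<gamma>\<in>G. mon (f \<gamma>) a) * h a) - c * (\<Sum>a\<in>F. mon {#} a * h a)"
      by (simp only: sum_subtractf sum_distrib_left)
    finally show ?thesis .
  qed
  also have "(\<Sum>a\<in>F. (\<Sum>\<gamma>\<in>G. mon (f \<gamma>) a) * h a) = (\<Sum>\<gamma>\<in>G. h (f \<gamma>))"
    by (rule sum_indicator_swap[OF fF fG sub])
  also have "(\<Sum>a\<in>F. mon {#} a * h a) = h {#}"
  proof -
    have "(\<Sum>a\<in>F. mon {#} a * h a) = (\<Sum>a\<in>F. if a = {#} then h a else 0)"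
      unfolding mon_def by (intro sum.cong refl) simp
    also have "\<dots> = h {#}" using sum.delta[OF fF, of "{#}" h] e by simp
    finally show ?thesis .
  qed
  finally show ?thesis .
qed

context xctx
begin

lemma phi_in:
  assumes "v \<in> gc_verts X cs \<times> gc_verts X (homog cs)" "phi cs v = Some M"
  shows "set_mset M \<subseteq> SX"
proof (cases v)
  case (Pair u w)
  show ?thesis
  proof (cases u)
    case (VarV x c)
    then show ?thesis using assms Pair by (cases w) (auto split: if_splits)
  next
    case (ConV i a)
    then have i: "i < length cs" using assms Pair by auto
    from assms Pair ConV obtain b where "M = cmono (cs ! i) (xor3 a b)" by (cases w) (auto split: if_splits)
    then show ?thesis using cmono_in[OF nth_mem[OF i]] by simp
  qed
qed

lemma hW_empty: "hW Q {#} = W L Q {#}"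
  by (simp add: hW_def)

lemma annih_main:
  fixes d :: nat
  assumes q: "poly_over (gc_verts X cs \<times> gc_verts X (homog cs)) q" and fg: "finite (supp g)"
    and a0: "g a0 \<noteq> 0" and dg: "deg_le g (size a0)" and dgq: "deg_le (pmul g q) d"
    and H: "\<And>Q. poly_over SX Q \<Longrightarrow> deg_le Q (3 * (d - size a0)) \<Longrightarrow> size a0 \<le> d
              \<Longrightarrow> (\<Sum>a\<in>supp g. g a * hW Q a) = 0"
  shows "pE (Lsub (phi cs) L) (pmul g q) = 0"
proof -
  have fq: "finite (supp q)" using q by (rule fin_of_poly_over)
  have E: "pE (Lsub (phi cs) L) (pmul g q) = (\<Sum>a\<in>supp g. g a * hW (subst (phi cs) q) a)"
    unfolding pE_Lsub_pmul[OF fg fq] hW_def by (intro sum.cong refl) simp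
  show ?thesis
  proof (cases "supp q = {}")
    case True
    then have "supp (subst (phi cs) q) = {}" using supp_subst[of "phi cs" q] by auto
    then have "\<forall>n. W L (subst (phi cs) q) n = 0" by (simp add: W_def)
    then have "\<forall>a. hW (subst (phi cs) q) a = 0" by (simp add: hW_def)
    then show ?thesis using E by simp
  next
    case False
    then obtain b where b: "q b \<noteq> 0" by auto
    have le: "size a0 \<le> d" by (rule deg_lower2[OF fg fq a0 dg dgq b])
    have dq: "deg_le q (d - size a0)" by (rule deg_lower[OF fg fq a0 dg dgq])
    have pQ: "poly_over SX (subst (phi cs) q)"
      by (rule poly_over_subst[OF q]) (rule phi_in)
    have dQ: "deg_le (subst (phi cs) q) (3 * (d - size a0))"
      by (rule deg_subst[OF dq phi_size])
    show ?thesis using E H[OF pQ dQ le] by simp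
  qed
qed

lemma X_ne: "u \<in> gc_verts X cs \<Longrightarrow> \<exists>x. x \<in> X"
proof (cases u)
  case (VarV x c)
  then show "u \<in> gc_verts X cs \<Longrightarrow> \<exists>x. x \<in> X" by auto
next
  case (ConV i a)
  then show "u \<in> gc_verts X cs \<Longrightarrow> \<exists>x. x \<in> X" using eq_ok_cs[of i] by auto
qed

lemma iso_bool:
  assumes d3: "3 * d \<le> r" and u: "u \<in> gc_verts X cs" and v: "v \<in> gc_verts X (homog cs)"
  shows "annihilates (Lsub (phi cs) L) (gc_verts X cs \<times> gc_verts X (homog cs)) d
           (psub (pmul (pvar (u, v)) (pvar (u, v))) (pvar (u, v)))"
  unfolding annihilates_def
proof (intro allI impI)
  fix q assume q: "poly_over (gc_verts X cs \<times> gc_verts X (homog cs)) q"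
    and dgq: "deg_le (pmul (psub (pmul (pvar (u, v)) (pvar (u, v))) (pvar (u, v))) q) d"
  let ?w = "(u, v)"
  let ?g = "psub (pmul (pvar ?w) (pvar ?w)) (pvar ?w)"
  have g: "?g = (\<lambda>m. mon {#?w,?w#} m - mon {#?w#} m)"
    by (simp add: psub_def pvar_mon pmul_mon_mon)
  have F: "supp ?g \<subseteq> {{#?w,?w#}, {#?w#}}" by (auto simp: g mon_def split: if_splits)
  have fg: "finite (supp ?g)" by (rule finite_subset[OF F]) auto
  have a0: "?g {#?w,?w#} \<noteq> 0" by (simp add: g mon_def)
  have dg: "deg_le ?g (size {#?w,?w#})" by (auto simp: deg_le_def g mon_def split: if_splits)
  show "pE (Lsub (phi cs) L) (pmul ?g q) = 0"
  proof (rule annih_main[OF q fg a0 dg dgq])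
    fix Q assume Q: "poly_over SX Q" "deg_le Q (3 * (d - size {#?w,?w#}))" and le: "size {#?w,?w#} \<le> d"
    have "(\<Sum>a\<in>supp ?g. ?g a * hW Q a) = (\<Sum>a\<in>{{#?w,?w#}, {#?w#}}. ?g a * hW Q a)"
      by (rule sum_supp_superset[OF _ F]) auto
    also have "\<dots> = hW Q {#?w,?w#} - hW Q {#?w#}" by (simp add: g mon_def)
    also have "\<dots> = 0"
    proof (cases "phi cs ?w")
      case None then show ?thesis by (simp add: hW_pair hW_single)
    next
      case (Some M)
      have "W L Q (M + M) = W L Q M"
        by (rule bool_sum[OF Q _ u v Some]) (use le d3 in simp)
      then show ?thesis using Some by (simp add: hW_pair hW_single)
    qed
    finally show "(\<Sum>a\<in>supp ?g. ?g a * hW Q a) = 0" .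
  qed
qed

lemma iso_row:
  assumes d3: "3 * d \<le> r" and u: "u \<in> gc_verts X cs"
  shows "annihilates (Lsub (phi cs) L) (gc_verts X cs \<times> gc_verts X (homog cs)) d
           (psub (psum (gc_verts X (homog cs)) (\<lambda>v. pvar (u, v))) (pconst 1))"
  unfolding annihilates_def
proof (intro allI impI)
  let ?VH = "gc_verts X (homog cs)"
  let ?g = "psub (psum ?VH (\<lambda>v. pvar (u, v))) (pconst 1)"
  fix q assume q: "poly_over (gc_verts X cs \<times> ?VH) q" and dgq: "deg_le (pmul ?g q) d"
  let ?f = "\<lambda>v. {#(u, v)#}"
  let ?F = "insert {#} (?f ` ?VH)"
  have g: "?g = (\<lambda>m. 1 * (\<Sum>v\<in>?VH. mon (?f v) m) - 1 * mon {#} m)"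
    by (simp add: psub_def psum_def pvar_mon pconst1_mon)
  obtain x where x: "x \<in> X" using X_ne[OF u] by blast
  have v0: "VarV x False \<in> ?VH" using x by simp
  have fF: "finite ?F" using finVH by simp
  have F: "supp ?g \<subseteq> ?F"
  proof
    fix m assume "m \<in> supp ?g"
    then have ne: "1 * (\<Sum>v\<in>?VH. mon (?f v) m) - 1 * mon {#} m \<noteq> 0" by (simp add: g)
    show "m \<in> ?F"
    proof (cases "m = {#}")
      case False
      then have "(\<Sum>v\<in>?VH. mon (?f v) m) \<noteq> 0" using ne by (simp add: mon_def)
      then obtain v where "v \<in> ?VH" "mon (?f v) m \<noteq> 0"
        by (rule sum.not_neutral_contains_not_neutral)
      then show ?thesis by (auto simp: mon_def split: if_splits)
    qed simp
  qed
  have fg: "finite (supp ?g)" by (rule finite_subset[OF F fF])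
  have a0: "?g (?f (VarV x False)) \<noteq> 0"
  proof -
    have "(\<Sum>v\<in>?VH. mon (?f v) (?f (VarV x False))) = (\<Sum>v\<in>?VH. if v = VarV x False then 1 else 0)"
      by (intro sum.cong refl) (auto simp: mon_def)
    also have "\<dots> = 1" using sum.delta[OF finVH, of "VarV x False" "\<lambda>_. (1::real)"] v0 by simp
    finally show ?thesis by (simp add: g mon_def)
  qed
  have dg: "deg_le ?g (size (?f (VarV x False)))"
    unfolding deg_le_def
  proof (intro allI impI)
    fix m assume "?g m \<noteq> 0"
    then have "m \<in> ?F" using F by auto
    then show "size m \<le> size (?f (VarV x False))" by auto
  qed
  show "pE (Lsub (phi cs) L) (pmul ?g q) = 0"
  proof (rule annih_main[OF q fg a0 dg dgq])
    fix Q assume Q: "poly_over SX Q" "deg_le Q (3 * (d - size (?f (VarV x False))))"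
      and le: "size (?f (VarV x False)) \<le> d"
    have "(\<Sum>a\<in>supp ?g. ?g a * hW Q a) = (\<Sum>a\<in>?F. ?g a * hW Q a)"
      by (rule sum_supp_superset[OF fF F]) auto
    also have "\<dots> = 1 * (\<Sum>v\<in>?VH. hW Q (?f v)) - 1 * hW Q {#}"
      unfolding g by (rule sum_lin_comb[OF fF finVH]) auto
    also have "\<dots> = 0"
      using row_sum[OF Q _ u] le d3 by (simp add: hW_empty)
    finally show "(\<Sum>a\<in>supp ?g. ?g a * hW Q a) = 0" .
  qed
qed

lemma iso_col:
  assumes d3: "3 * d \<le> r" and v: "v \<in> gc_verts X (homog cs)"
  shows "annihilates (Lsub (phi cs) L) (gc_verts X cs \<times> gc_verts X (homog cs)) d
           (psub (psum (gc_verts X cs) (\<lambda>u. pvar (u, v))) (pconst 1))"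
  unfolding annihilates_def
proof (intro allI impI)
  let ?VG = "gc_verts X cs"
  let ?g = "psub (psum ?VG (\<lambda>u. pvar (u, v))) (pconst 1)"
  fix q assume q: "poly_over (?VG \<times> gc_verts X (homog cs)) q" and dgq: "deg_le (pmul ?g q) d"
  let ?f = "\<lambda>u. {#(u, v)#}"
  let ?F = "insert {#} (?f ` ?VG)"
  have g: "?g = (\<lambda>m. 1 * (\<Sum>u\<in>?VG. mon (?f u) m) - 1 * mon {#} m)"
    by (simp add: psub_def psum_def pvar_mon pconst1_mon)
  have "\<exists>x. x \<in> X"
  proof (cases v)
    case (VarV x c) then show ?thesis using v by auto
  next
    case (ConV i b) then show ?thesis using v eq_ok_cs[of i] by auto
  qed
  then obtain x where x: "x \<in> X" by blast
  have v0: "VarV x False \<in> ?VG" using x by simp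
  have fF: "finite ?F" using finVG by simp
  have F: "supp ?g \<subseteq> ?F"
  proof
    fix m assume "m \<in> supp ?g"
    then have ne: "1 * (\<Sum>u\<in>?VG. mon (?f u) m) - 1 * mon {#} m \<noteq> 0" by (simp add: g)
    show "m \<in> ?F"
    proof (cases "m = {#}")
      case False
      then have "(\<Sum>u\<in>?VG. mon (?f u) m) \<noteq> 0" using ne by (simp add: mon_def)
      then obtain u where "u \<in> ?VG" "mon (?f u) m \<noteq> 0"
        by (rule sum.not_neutral_contains_not_neutral)
      then show ?thesis by (auto simp: mon_def split: if_splits)
    qed simp
  qed
  have fg: "finite (supp ?g)" by (rule finite_subset[OF F fF])
  have a0: "?g (?f (VarV x False)) \<noteq> 0"
  proof -
    have "(\<Sum>u\<in>?VG. mon (?f u) (?f (VarV x False))) = (\<Sum>u\<in>?VG. if u = VarV x False then 1 else 0)"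
      by (intro sum.cong refl) (auto simp: mon_def)
    also have "\<dots> = 1" using sum.delta[OF finVG, of "VarV x False" "\<lambda>_. (1::real)"] v0 by simp
    finally show ?thesis by (simp add: g mon_def)
  qed
  have dg: "deg_le ?g (size (?f (VarV x False)))"
    unfolding deg_le_def
  proof (intro allI impI)
    fix m assume "?g m \<noteq> 0"
    then have "m \<in> ?F" using F by auto
    then show "size m \<le> size (?f (VarV x False))" by auto
  qed
  show "pE (Lsub (phi cs) L) (pmul ?g q) = 0"
  proof (rule annih_main[OF q fg a0 dg dgq])
    fix Q assume Q: "poly_over SX Q" "deg_le Q (3 * (d - size (?f (VarV x False))))"
      and le: "size (?f (VarV x False)) \<le> d"
    have "(\<Sum>a\<in>supp ?g. ?g a * hW Q a) = (\<Sum>a\<in>?F. ?g a * hW Q a)"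
      by (rule sum_supp_superset[OF fF F]) auto
    also have "\<dots> = 1 * (\<Sum>u\<in>?VG. hW Q (?f u)) - 1 * hW Q {#}"
      unfolding g by (rule sum_lin_comb[OF fF finVG]) auto
    also have "\<dots> = 0"
      using col_sum[OF Q _ v] le d3 by (simp add: hW_empty)
    finally show "(\<Sum>a\<in>supp ?g. ?g a * hW Q a) = 0" .
  qed
qed

end


context xctx
begin

lemma edge_coeff:
  "edge_poly EG EH m = 1/2 * (\<Sum>\<gamma>\<in>{(u, u'). {u, u'} \<in> EG} \<times> {(v, v'). {v, v'} \<in> EH}.
       mon {#(fst (fst \<gamma>), fst (snd \<gamma>)), (snd (fst \<gamma>), snd (snd \<gamma>))#} m)"
proof -
  have "edge_poly EG EH m = 1/2 * (\<Sum>ob\<in>{(u, u'). {u, u'} \<in> EG}. \<Sum>ob'\<in>{(v, v'). {v, v'} \<in> EH}.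
       mon {#(fst ob, fst ob'), (snd ob, snd ob')#} m)"
    unfolding edge_poly_def psmult_def psum_def
    by (simp add: case_prod_unfold pvar_mon pmul_mon_mon add_mset_commute)
  then show ?thesis by (simp add: sum.cartesian_product case_prod_unfold)
qed

lemma finEGo: "finite {(u, u'). {u, u'} \<in> gc_edges X cs}"
proof (rule finite_subset)
  show "{(u, u'). {u, u'} \<in> gc_edges X cs} \<subseteq> gc_verts X cs \<times> gc_verts X cs"
    using edges_sub[OF ok_cs] by auto
  show "finite (gc_verts X cs \<times> gc_verts X cs)" using finVG by simp
qed

lemma iso_edge:
  assumes d3: "3 * d \<le> r" and p: "poly_over (gc_verts X cs \<times> gc_verts X (homog cs)) p"
    and dd: "deg_le (pmul (psub (edge_poly (gc_edges X cs) (gc_edges X (homog cs)))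
                 (pconst (real (card (gc_edges X cs))))) (pmul p p)) d"
  shows "pE (Lsub (phi cs) L) (pmul (psub (edge_poly (gc_edges X cs) (gc_edges X (homog cs)))
                 (pconst (real (card (gc_edges X cs))))) (pmul p p)) \<ge> 0"
proof -
  let ?EG = "gc_edges X cs"
  let ?EH = "gc_edges X (homog cs)"
  let ?EGo = "{(u, u'). {u, u'} \<in> ?EG}"
  let ?G = "?EGo \<times> EHo"
  let ?f = "\<lambda>\<gamma>. {#(fst (fst \<gamma>), fst (snd \<gamma>)), (snd (fst \<gamma>), snd (snd \<gamma>))#}"
  let ?c = "real (card ?EG)"
  let ?g = "psub (edge_poly ?EG ?EH) (pconst ?c)"
  let ?F = "insert {#} (?f ` ?G)"
  have g: "?g = (\<lambda>m. 1/2 * (\<Sum>\<gamma>\<in>?G. mon (?f \<gamma>) m) - ?c * mon {#} m)"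
    by (rule ext) (simp add: psub_def edge_coeff pconst_def mon_def)
  have fG: "finite ?G" using finEGo finEHo by simp
  have fF: "finite ?F" using fG by simp
  have pp: "poly_over (gc_verts X cs \<times> gc_verts X (homog cs)) (pmul p p)" by (rule poly_over_pmul[OF p p])
  have F: "supp ?g \<subseteq> ?F"
  proof
    fix m assume "m \<in> supp ?g"
    then have ne: "1/2 * (\<Sum>\<gamma>\<in>?G. mon (?f \<gamma>) m) - ?c * mon {#} m \<noteq> 0" by (simp add: g)
    show "m \<in> ?F"
    proof (cases "m = {#}")
      case False
      then have "(\<Sum>\<gamma>\<in>?G. mon (?f \<gamma>) m) \<noteq> 0" using ne by (simp add: mon_def)
      then obtain \<gamma> where "\<gamma> \<in> ?G" "mon (?f \<gamma>) m \<noteq> 0"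
        by (rule sum.not_neutral_contains_not_neutral)
      then show ?thesis by (auto simp: mon_def split: if_splits)
    qed simp
  qed
  have fg: "finite (supp ?g)" by (rule finite_subset[OF F fF])
  have "pE (Lsub (phi cs) L) (pmul ?g (pmul p p)) = 0"
  proof (cases "?EG = {}")
    case True
    then have "?g = (\<lambda>m. 0)" unfolding g by simp
    then have "supp ?g = {}" by (simp add: supp_def)
    then show ?thesis
      using pE_Lsub_pmul[OF fg fin_of_poly_over[OF pp], of "phi cs" L] by simp
  next
    case False
    then obtain e where e: "e \<in> ?EG" by blast
    obtain u u' where uu: "u \<noteq> u'" "e = {u, u'}" using edges_two[OF e] by blast
    have ob: "(u, u') \<in> ?EGo" using e uu by simp
    have "u \<in> gc_verts X cs" using edges_sub[OF ok_cs e] uu by auto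
    then obtain x where x: "x \<in> X" using X_ne by blast
    have "{VarV x False, VarV x True} \<in> ?EH"
      unfolding edge_iff using x by (intro disjI1 exI[of _ x] exI[of _ False]) simp
    then have ob': "(VarV x False, VarV x True) \<in> EHo" by simp
    let ?\<gamma>0 = "((u, u'), (VarV x False, VarV x True))"
    let ?a0 = "?f ?\<gamma>0"
    have g0: "?\<gamma>0 \<in> ?G" using ob ob' by simp
    have "mon (?f ?\<gamma>0) ?a0 \<le> (\<Sum>\<gamma>\<in>?G. mon (?f \<gamma>) ?a0)"
      by (rule member_le_sum[OF g0]) (auto simp: mon_def fG)
    then have "1 \<le> (\<Sum>\<gamma>\<in>?G. mon (?f \<gamma>) ?a0)" by simp
    then have a0: "?g ?a0 \<noteq> 0" by (simp add: g mon_def)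
    have dg: "deg_le ?g (size ?a0)"
      unfolding deg_le_def
    proof (intro allI impI)
      fix m assume "?g m \<noteq> 0"
      then have "m \<in> ?F" using F by auto
      then show "size m \<le> size ?a0" by auto
    qed
    show ?thesis
    proof (rule annih_main[OF pp fg a0 dg dd])
      fix Q assume Q: "poly_over SX Q" "deg_le Q (3 * (d - size ?a0))" and le: "size ?a0 \<le> d"
      have sz: "6 + 3 * (d - size ?a0) \<le> r" using le d3 by simp
      have "(\<Sum>a\<in>supp ?g. ?g a * hW Q a) = (\<Sum>a\<in>?F. ?g a * hW Q a)"
        by (rule sum_supp_superset[OF fF F]) auto
      also have "\<dots> = 1/2 * (\<Sum>\<gamma>\<in>?G. hW Q (?f \<gamma>)) - ?c * hW Q {#}"
        unfolding g by (rule sum_lin_comb[OF fF fG]) auto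
      also have "(\<Sum>\<gamma>\<in>?G. hW Q (?f \<gamma>)) = (\<Sum>ob\<in>?EGo. \<Sum>ob'\<in>EHo. hW Q {#(fst ob, fst ob'), (snd ob, snd ob')#})"
        by (simp add: sum.cartesian_product case_prod_unfold)
      also have "\<dots> = (\<Sum>ob\<in>?EGo. W L Q {#})"
      proof (rule sum.cong[OF refl])
        fix ob assume "ob \<in> ?EGo"
        then have "{fst ob, snd ob} \<in> ?EG" by (cases ob) auto
        then show "(\<Sum>ob'\<in>EHo. hW Q {#(fst ob, fst ob'), (snd ob, snd ob')#}) = W L Q {#}"
          by (rule edge_sum[OF Q sz])
      qed
      also have "\<dots> = real (card ?EGo) * W L Q {#}" by simp
      also have "card ?EGo = 2 * card ?EG"
        by (rule card_ordered[OF finEG edges_two])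
      finally show "(\<Sum>a\<in>supp ?g. ?g a * hW Q a) = 0" by (simp add: hW_empty)
    qed
  qed
  then show ?thesis by simp
qed

lemma iso_psd:
  assumes d3: "3 * d \<le> r"
  shows "psd_op (Lsub (phi cs) L) (gc_verts X cs \<times> gc_verts X (homog cs)) d"
  unfolding psd_op_def
proof (intro allI impI)
  fix p assume p: "poly_over (gc_verts X cs \<times> gc_verts X (homog cs)) p" and dp: "deg_le p (d div 2)"
  let ?P = "subst (phi cs) p"
  have pP: "poly_over SX ?P" by (rule poly_over_subst[OF p]) (rule phi_in)
  have "deg_le ?P (3 * (d div 2))" by (rule deg_subst[OF dp phi_size])
  moreover have "3 * (d div 2) \<le> r div 2" using d3 by linarith
  ultimately have dP: "deg_le ?P (r div 2)" by (rule deg_le_mon)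
  have "psd_op L SX r" using pe by (simp add: xor_pseudo_exp_def Let_def)
  then have "pE L (pmul ?P ?P) \<ge> 0" using pP dP by (simp add: psd_op_def)
  then show "pE (Lsub (phi cs) L) (pmul p p) \<ge> 0"
    using pE_Lsub_sq[OF fin_of_poly_over[OF p], of "phi cs" L] by simp
qed

lemma iso_main:
  assumes d3: "3 * d \<le> r"
  shows "iso_pseudo_exp (gc_verts X cs) (gc_edges X cs) (gc_verts X (homog cs)) (gc_edges X (homog cs)) d
           (Lsub (phi cs) L)"
  unfolding iso_pseudo_exp_def Let_def
proof (intro conjI ballI allI impI)
  show "Lsub (phi cs) L {#} = 1" using pe by (simp add: Lsub_empty xor_pseudo_exp_def Let_def)
next
  fix u v assume "u \<in> gc_verts X cs" "v \<in> gc_verts X (homog cs)"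
  then show "annihilates (Lsub (phi cs) L) (gc_verts X cs \<times> gc_verts X (homog cs)) d
           (psub (pmul (pvar (u, v)) (pvar (u, v))) (pvar (u, v)))"
    by (rule iso_bool[OF d3])
next
  fix u assume "u \<in> gc_verts X cs"
  then show "annihilates (Lsub (phi cs) L) (gc_verts X cs \<times> gc_verts X (homog cs)) d
           (psub (psum (gc_verts X (homog cs)) (\<lambda>v. pvar (u, v))) (pconst 1))"
    by (rule iso_row[OF d3])
next
  fix v assume "v \<in> gc_verts X (homog cs)"
  then show "annihilates (Lsub (phi cs) L) (gc_verts X cs \<times> gc_verts X (homog cs)) d
           (psub (psum (gc_verts X cs) (\<lambda>u. pvar (u, v))) (pconst 1))"
    by (rule iso_col[OF d3])
next
  fix p assume "poly_over (gc_verts X cs \<times> gc_verts X (homog cs)) p"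
    "deg_le (pmul (psub (edge_poly (gc_edges X cs) (gc_edges X (homog cs)))
                 (pconst (real (card (gc_edges X cs))))) (pmul p p)) d"
  then show "0 \<le> pE (Lsub (phi cs) L) (pmul (psub (edge_poly (gc_edges X cs) (gc_edges X (homog cs)))
                 (pconst (real (card (gc_edges X cs))))) (pmul p p))"
    by (rule iso_edge[OF d3])
next
  show "psd_op (Lsub (phi cs) L) (gc_verts X cs \<times> gc_verts X (homog cs)) d"
    by (rule iso_psd[OF d3])
qed

end

theorem lemma4p2:
  fixes X :: "'x set" and cs :: "'x xor_eq list" and r :: nat
  assumes "xor3_instance X cs"
    and "\<exists>L. xor_pseudo_exp X cs r L"
  shows "\<forall>d. 3 * d \<le> r \<longrightarrow>
           (\<exists>L. iso_pseudo_exp (gc_verts X cs) (gc_edges X cs)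
                               (gc_verts X (homog cs)) (gc_edges X (homog cs)) d L)"
proof (intro allI impI)
  fix d assume d: "3 * d \<le> r"
  obtain L where L: "xor_pseudo_exp X cs r L" using assms(2) by blast
  interpret xctx X cs r L by unfold_locales (rule assms(1), rule L)
  show "\<exists>L. iso_pseudo_exp (gc_verts X cs) (gc_edges X cs)
                               (gc_verts X (homog cs)) (gc_edges X (homog cs)) d L"
    using iso_main[OF d] by blast
qed


end
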